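(* Let $\mathcal{H}$ be a real Hilbert space, let $A\colon \mathcal{H}\rightrightarrows\mathcal{H}$ be maximally monotone and let $B\colon \mathcal{H}\to\mathcal{H}$ be monotone with $(A+B)^{-1}(0)\neq\varnothing$. Suppose $\alpha\in[0,1)$, $\beta\in(0,1]$, $\lambda>0$ and either (a) $B$ is $L$-Lipschitz and $\lambda < \min\left\{\frac{2-\beta -\alpha \beta -2\alpha}{2L}, \frac{1-\alpha-\alpha\beta}{\beta L}\right\}$, or (b) $B$ is $(1/L)$-cocoercive, $\alpha<\frac{2-\beta}{2+\beta}$ and $\lambda < \min\left\{ \frac{2-\beta -\alpha \beta + 2\alpha}{2L},\frac{1-\alpha+\alpha\beta}{\beta L}\right\}$. Given $x_0,x_{-1}\in\mathcal{H}$, define sequences $(x_k)$, $(z_k)$ by $$z_{k+1} := J_{\lambda A}\Bigl( x_k - \lambda B(x_k) - \frac{\lambda}{\beta}(B(x_k)- B(x_{k-1})) + \frac{\alpha}{\beta}(x_k-x_{k-1}) \Bigr),\qquad x_{k+1} := (1-\beta) x_k + \beta z_{k+1}$$ for all $k\in\mathbb{N}$. Then $(x_k)$ converges weakly to a point in $(A+B)^{-1}(0)$.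
   Context: $J_{\lambda A}:=(I+\lambda A)^{-1}$ is the resolvent. $B$ is $\beta'$-cocoercive if $\langle x-y,B(x)-B(y)\rangle\geq\beta'\|B(x)-B(y)\|^2$ for all $x,y$; here $\beta'=1/L$. *)

theory Defs
  imports "HOL-Analysis.Analysis"
begin

definition monotone_op :: "('a::real_inner \<Rightarrow> 'a set) \<Rightarrow> bool" where
  "monotone_op A \<longleftrightarrow>
     (\<forall>x y u v. u \<in> A x \<longrightarrow> v \<in> A y \<longrightarrow> inner (x - y) (u - v) \<ge> 0)"

definition maximal_monotone :: "('a::real_inner \<Rightarrow> 'a set) \<Rightarrow> bool" where
  "maximal_monotone A \<longleftrightarrow> monotone_op A \<and>
     (\<forall>A'. monotone_op A' \<and> (\<forall>x. A x \<subseteq> A' x) \<longrightarrow> A' = A)"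

definition cocoercive :: "real \<Rightarrow> ('a::real_inner \<Rightarrow> 'a) \<Rightarrow> bool" where
  "cocoercive b B \<longleftrightarrow>
     (\<forall>x y. inner (x - y) (B x - B y) \<ge> b * (norm (B x - B y))\<^sup>2)"

text \<open>For a maximally monotone A this is single-valued with full domain (Minty).\<close>
definition resolvent :: "real \<Rightarrow> ('a::real_inner \<Rightarrow> 'a set) \<Rightarrow> 'a \<Rightarrow> 'a" where
  "resolvent lam A w = (THE z. \<exists>u \<in> A z. w = z + lam *\<^sub>R u)"

definition zeros_sum :: "('a::real_inner \<Rightarrow> 'a set) \<Rightarrow> ('a \<Rightarrow> 'a) \<Rightarrow> 'a set" where
  "zeros_sum A B = {x. \<exists>u \<in> A x. u + B x = 0}"

definition weakly_converges :: "(nat \<Rightarrow> 'a::real_inner) \<Rightarrow> 'a \<Rightarrow> bool" where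
  "weakly_converges x p \<longleftrightarrow> (\<forall>y. (\<lambda>k. inner (x k) y) \<longlonglongrightarrow> inner p y)"

end

theory Submission
  imports Defs "HOL-Library.Diagonal_Subsequence"
begin

lemma quad_zero:
  fixes a c :: real
  assumes "a \<ge> 0" and "\<And>t. 0 \<le> t * t * a - 2 * t * c"
  shows "c = 0"
proof (cases "a = 0")
  case True
  with assms(2)[of c] have "c * c \<le> 0" by simp
  then show ?thesis by (metis antisym zero_le_square mult_eq_0_iff)
next
  case False
  with assms have a: "a > 0" by simp
  have "0 \<le> (c/a) * (c/a) * a - 2 * (c/a) * c" using assms(2) .
  also have "\<dots> = - (c*c)/a" using a by (simp add: field_simps)
  finally have "c * c \<le> 0" using a by (simp add: divide_nonneg_pos field_simps)
  then show ?thesis by (metis antisym zero_le_square mult_eq_0_iff)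
qed

lemma norm_comb_sq:
  fixes a b :: "'a::real_inner"
  shows "(norm (t *\<^sub>R a + (1 - t) *\<^sub>R b))\<^sup>2 =
     t * (norm a)\<^sup>2 + (1 - t) * (norm b)\<^sup>2 - t * (1 - t) * (norm (a - b))\<^sup>2"
  by (simp add: power2_norm_eq_inner inner_add_left inner_add_right inner_diff_left
      inner_diff_right inner_commute algebra_simps)

lemma cauchy_min:
  fixes h :: "'b \<Rightarrow> real" and m :: "'b \<Rightarrow> 'a::{real_inner,complete_space}"
  assumes ne: "C \<noteq> {}" and lb: "\<And>c. c \<in> C \<Longrightarrow> lbv \<le> h c"
    and mid: "\<And>a b. a \<in> C \<Longrightarrow> b \<in> C \<Longrightarrow> \<exists>c\<in>C. h c \<le> (h a + h b)/2 - (norm (m a - m b))\<^sup>2/4"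
  shows "\<exists>f l. (\<forall>n. f n \<in> C) \<and> (\<forall>c\<in>C. Inf (h ` C) \<le> h c) \<and>
     (\<lambda>n. h (f n)) \<longlonglongrightarrow> Inf (h ` C) \<and> (\<lambda>n. m (f n)) \<longlonglongrightarrow> l"
proof -
  define s where "s = Inf (h ` C)"
  have bdd: "bdd_below (h ` C)" using lb by (rule bdd_belowI2)
  have sle: "\<And>c. c \<in> C \<Longrightarrow> s \<le> h c" unfolding s_def using bdd by (simp add: cInf_lower)
  have "\<forall>n. \<exists>c\<in>C. h c < s + 1 / (Suc n)"
  proof
    fix n
    have "s < s + 1 / Suc n" by simp
    then have "\<exists>y\<in>h ` C. y < s + 1 / Suc n" unfolding s_def
      using ne bdd by (subst (asm) cInf_less_iff) auto
    then show "\<exists>c\<in>C. h c < s + 1 / (Suc n)" by auto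
  qed
  then obtain f where f: "\<And>n. f n \<in> C" "\<And>n. h (f n) < s + 1 / Suc n" by metis
  have key: "(norm (m (f i) - m (f j)))\<^sup>2 \<le> 2 / Suc i + 2 / Suc j" for i j
  proof -
    obtain c where c: "c \<in> C" "h c \<le> (h (f i) + h (f j))/2 - (norm (m (f i) - m (f j)))\<^sup>2/4"
      using mid[OF f(1) f(1)] by blast
    have "s \<le> h c" using sle c(1) .
    moreover have "2 / real (Suc i) = 2 * (1 / real (Suc i))" "2 / real (Suc j) = 2 * (1 / real (Suc j))" by simp_all
    ultimately show ?thesis using c(2) f(2)[of i] f(2)[of j] by argo
  qed
  have "Cauchy (\<lambda>n. m (f n))"
  proof (rule metric_CauchyI)
    fix e :: real assume e: "e > 0"
    obtain N :: nat where N: "4 / e\<^sup>2 < N" using reals_Archimedean2 by blast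
    have "N > 0" using N e by (metis of_nat_0_less_iff order.strict_trans zero_less_divide_iff zero_less_numeral zero_less_power)
    show "\<exists>M. \<forall>i\<ge>M. \<forall>j\<ge>M. dist (m (f i)) (m (f j)) < e"
    proof (intro exI allI impI)
      fix i j assume ij: "N \<le> i" "N \<le> j"
      have "2 / Suc i \<le> 2 / N" using ij \<open>N > 0\<close> by (simp add: frac_le)
      moreover have "2 / Suc j \<le> 2 / N" using ij \<open>N > 0\<close> by (simp add: frac_le)
      ultimately have "(norm (m (f i) - m (f j)))\<^sup>2 \<le> 4 / N" using key[of i j] by simp
      also have "4 / N < e\<^sup>2" using N e \<open>N > 0\<close> by (simp add: field_simps)
      finally have "(norm (m (f i) - m (f j)))\<^sup>2 < e\<^sup>2" .
      then have "norm (m (f i) - m (f j)) < e" using e by (simp add: power_less_imp_less_base)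
      then show "dist (m (f i)) (m (f j)) < e" by (simp add: dist_norm)
    qed
  qed
  then obtain l where l: "(\<lambda>n. m (f n)) \<longlonglongrightarrow> l" using Cauchy_convergent_iff convergent_def by blast
  have "(\<lambda>n. h (f n)) \<longlonglongrightarrow> s"
  proof (rule tendsto_sandwich[of "\<lambda>n. s" _ _ "\<lambda>n. s + 1 / Suc n"])
    show "\<forall>\<^sub>F n in sequentially. s \<le> h (f n)" using sle f(1) by auto
    show "\<forall>\<^sub>F n in sequentially. h (f n) \<le> s + 1 / Suc n" by (intro always_eventually allI less_imp_le f(2))
    show "(\<lambda>n. s) \<longlonglongrightarrow> s" by simp
    have "(\<lambda>n. s + 1 / real (Suc n)) \<longlonglongrightarrow> s + 0"
      by (intro tendsto_intros LIMSEQ_inverse_real_of_nat[unfolded inverse_eq_divide])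
    then show "(\<lambda>n. s + 1 / real (Suc n)) \<longlonglongrightarrow> s" by simp
  qed
  then show ?thesis using f(1) sle l unfolding s_def by blast
qed

lemma min_convex:
  fixes Q :: "'a::{real_inner,complete_space} \<Rightarrow> real"
  assumes ne: "C \<noteq> {}" and cl: "closed C" and cv: "convex C" and ct: "continuous_on C Q"
    and lb: "\<And>c. c \<in> C \<Longrightarrow> lbv \<le> Q c"
    and mid: "\<And>a b. a \<in> C \<Longrightarrow> b \<in> C \<Longrightarrow> Q ((1/2) *\<^sub>R a + (1/2) *\<^sub>R b) \<le> (Q a + Q b)/2 - (norm (a - b))\<^sup>2/4"
  shows "\<exists>l\<in>C. \<forall>c\<in>C. Q l \<le> Q c"
proof -
  have "\<And>a b. a \<in> C \<Longrightarrow> b \<in> C \<Longrightarrow> \<exists>c\<in>C. Q c \<le> (Q a + Q b)/2 - (norm (id a - id b))\<^sup>2/4"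
  proof -
    fix a b assume ab: "a \<in> C" "b \<in> C"
    have "(1/2) *\<^sub>R a + (1/2) *\<^sub>R b \<in> C" using cv ab by (intro convexD) auto
    then show "\<exists>c\<in>C. Q c \<le> (Q a + Q b)/2 - (norm (id a - id b))\<^sup>2/4" using mid[OF ab] by auto
  qed
  from cauchy_min[of C lbv Q id, OF ne lb this] obtain f l where
    f: "\<forall>n. f n \<in> C" "\<forall>c\<in>C. Inf (Q ` C) \<le> Q c" "(\<lambda>n. Q (f n)) \<longlonglongrightarrow> Inf (Q ` C)"
       "(\<lambda>n. f n) \<longlonglongrightarrow> l" by auto
  have lC: "l \<in> C" using cl f(1) f(4) closed_sequentially by blast
  have "(\<lambda>n. Q (f n)) \<longlonglongrightarrow> Q l"
    by (rule continuous_on_tendsto_compose[OF ct f(4) lC]) (use f(1) in auto)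
  then have "Q l = Inf (Q ` C)" using f(3) LIMSEQ_unique by blast
  then show ?thesis using lC f(2) by metis
qed

lemma proj_subspace:
  fixes M :: "'a::{real_inner,complete_space} set"
  assumes sM: "subspace M" and cM: "closed M"
  shows "\<exists>P\<in>M. \<forall>v\<in>M. inner (d - P) v = 0"
proof -
  have "\<exists>l\<in>M. \<forall>c\<in>M. (norm (d - l))\<^sup>2 \<le> (norm (d - c))\<^sup>2"
  proof (rule min_convex[where lbv=0])
    show "M \<noteq> {}" using sM subspace_0 by blast
    show "closed M" by fact
    show "convex M" using sM by (rule subspace_imp_convex)
    show "continuous_on M (\<lambda>v. (norm (d - v))\<^sup>2)" by (intro continuous_intros)
    show "\<And>c. c \<in> M \<Longrightarrow> 0 \<le> (norm (d - c))\<^sup>2" by simp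
    fix a b
    have "d - ((1/2) *\<^sub>R a + (1/2) *\<^sub>R b) = (1/2) *\<^sub>R (d - a) + (1 - 1/2) *\<^sub>R (d - b)"
      by (simp add: algebra_simps flip: scaleR_add_left)
    then have "(norm (d - ((1/2) *\<^sub>R a + (1/2) *\<^sub>R b)))\<^sup>2 =
       (1/2) * (norm (d - a))\<^sup>2 + (1 - 1/2) * (norm (d - b))\<^sup>2 - (1/2) * (1 - 1/2) * (norm ((d - a) - (d - b)))\<^sup>2"
      using norm_comb_sq[of "1/2" "d - a" "d - b"] by simp
    also have "(d - a) - (d - b) = b - a" by simp
    finally show "(norm (d - ((1/2) *\<^sub>R a + (1/2) *\<^sub>R b)))\<^sup>2 \<le> ((norm (d - a))\<^sup>2 + (norm (d - b))\<^sup>2)/2 - (norm (a - b))\<^sup>2/4"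
      by (simp add: norm_minus_commute)
  qed
  then obtain P where P: "P \<in> M" "\<And>c. c \<in> M \<Longrightarrow> (norm (d - P))\<^sup>2 \<le> (norm (d - c))\<^sup>2" by blast
  show ?thesis
  proof (intro bexI[OF _ P(1)] ballI)
    fix v assume v: "v \<in> M"
    show "inner (d - P) v = 0"
    proof (rule quad_zero[of "(norm v)\<^sup>2"])
      show "0 \<le> (norm v)\<^sup>2" by simp
      fix t
      have "P + t *\<^sub>R v \<in> M" using sM P(1) v by (simp add: subspace_add subspace_scale)
      from P(2)[OF this] have "(norm (d - P))\<^sup>2 \<le> (norm ((d - P) - t *\<^sub>R v))\<^sup>2" by (simp add: algebra_simps)
      also have "\<dots> = (norm (d - P))\<^sup>2 - 2 * t * inner (d - P) v + t * t * (norm v)\<^sup>2"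
        by (simp add: power2_norm_eq_inner inner_diff_left inner_diff_right inner_commute algebra_simps)
      finally show "0 \<le> t * t * (norm v)\<^sup>2 - 2 * t * inner (d - P) v" by simp
    qed
  qed
qed

lemma riesz_subspace:
  fixes M :: "'a::{real_inner,complete_space} set" and f :: "'a \<Rightarrow> real"
  assumes sM: "subspace M" and cM: "closed M"
    and add: "\<And>a b. a \<in> M \<Longrightarrow> b \<in> M \<Longrightarrow> f (a + b) = f a + f b"
    and scl: "\<And>a c. a \<in> M \<Longrightarrow> f (c *\<^sub>R a) = c * f a"
    and bnd: "\<And>a. a \<in> M \<Longrightarrow> \<bar>f a\<bar> \<le> K * norm a" and K: "K \<ge> 0"
  shows "\<exists>p\<in>M. \<forall>v\<in>M. f v = inner p v"
proof -
  have diff: "f a - f b = f (a - b)" if "a \<in> M" "b \<in> M" for a b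
  proof -
    have "a - b \<in> M" using sM that by (simp add: subspace_diff)
    then have "f a = f (a - b) + f b" using add[of "a - b" b] that by simp
    then show ?thesis by simp
  qed
  have ctf: "continuous_on M f"
    unfolding continuous_on_iff
  proof (intro ballI allI impI)
    fix x e assume x: "x \<in> M" and e: "(0::real) < e"
    show "\<exists>d>0. \<forall>x'\<in>M. dist x' x < d \<longrightarrow> dist (f x') (f x) < e"
    proof (intro exI[of _ "e / (K + 1)"] conjI ballI impI)
      show "0 < e / (K + 1)" using e K by simp
      fix x' assume x': "x' \<in> M" and dd: "dist x' x < e / (K + 1)"
      have "dist (f x') (f x) = \<bar>f (x' - x)\<bar>" using diff[OF x' x] by (simp add: dist_real_def)
      also have "\<dots> \<le> K * norm (x' - x)" using bnd sM x x' by (simp add: subspace_diff)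
      also have "\<dots> \<le> K * (e / (K + 1))" using dd K by (intro mult_left_mono) (auto simp: dist_norm)
      also have "\<dots> < e" using K e by (simp add: field_simps)
      finally show "dist (f x') (f x) < e" .
    qed
  qed
  have "\<exists>l\<in>M. \<forall>c\<in>M. (norm l)\<^sup>2 - 2 * f l \<le> (norm c)\<^sup>2 - 2 * f c"
  proof (rule min_convex[where lbv="- K\<^sup>2"])
    show "M \<noteq> {}" using sM subspace_0 by blast
    show "closed M" by fact
    show "convex M" using sM by (rule subspace_imp_convex)
    show "continuous_on M (\<lambda>v. (norm v)\<^sup>2 - 2 * f v)" by (intro continuous_intros ctf)
    fix c assume c: "c \<in> M"
    have "f c \<le> K * norm c" using bnd[OF c] by simp
    moreover have "0 \<le> (norm c - K)\<^sup>2" by simp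
    ultimately show "- K\<^sup>2 \<le> (norm c)\<^sup>2 - 2 * f c" by (simp add: power2_eq_square algebra_simps)
  next
    fix a b assume ab: "a \<in> M" "b \<in> M"
    have "f ((1/2) *\<^sub>R a + (1/2) *\<^sub>R b) = (1/2) * f a + (1/2) * f b"
      using ab sM by (simp add: add scl subspace_scale)
    moreover have "(norm ((1/2) *\<^sub>R a + (1 - 1/2) *\<^sub>R b))\<^sup>2 = (1/2) * (norm a)\<^sup>2 + (1 - 1/2) * (norm b)\<^sup>2 - (1/2) * (1 - 1/2) * (norm (a - b))\<^sup>2"
      by (rule norm_comb_sq)
    ultimately show "(norm ((1/2) *\<^sub>R a + (1/2) *\<^sub>R b))\<^sup>2 - 2 * f ((1/2) *\<^sub>R a + (1/2) *\<^sub>R b)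
        \<le> ((norm a)\<^sup>2 - 2 * f a + ((norm b)\<^sup>2 - 2 * f b)) / 2 - (norm (a - b))\<^sup>2 / 4"
      by simp
  qed
  then obtain l where l: "l \<in> M" "\<And>c. c \<in> M \<Longrightarrow> (norm l)\<^sup>2 - 2 * f l \<le> (norm c)\<^sup>2 - 2 * f c" by blast
  show ?thesis
  proof (intro bexI[OF _ l(1)] ballI)
    fix v assume v: "v \<in> M"
    have "f v - inner l v = 0"
    proof (rule quad_zero[of "(norm v)\<^sup>2"])
      show "0 \<le> (norm v)\<^sup>2" by simp
      fix t
      have tv: "t *\<^sub>R v \<in> M" using sM v by (simp add: subspace_scale)
      have "l + t *\<^sub>R v \<in> M" using sM l(1) tv by (simp add: subspace_add)
      from l(2)[OF this] have "(norm l)\<^sup>2 - 2 * f l \<le> (norm (l + t *\<^sub>R v))\<^sup>2 - 2 * f (l + t *\<^sub>R v)" .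
      also have "f (l + t *\<^sub>R v) = f l + t * f v" using add[OF l(1) tv] scl[OF v] by simp
      also have "(norm (l + t *\<^sub>R v))\<^sup>2 = (norm l)\<^sup>2 + 2 * t * inner l v + t * t * (norm v)\<^sup>2"
        by (simp add: power2_norm_eq_inner inner_add_left inner_add_right inner_commute algebra_simps)
      finally show "0 \<le> t * t * (norm v)\<^sup>2 - 2 * t * (f v - inner l v)" by (simp add: algebra_simps)
    qed
    then show "f v = inner l v" by simp
  qed
qed

lemma diag_conv:
  fixes x :: "nat \<Rightarrow> 'a::real_inner"
  assumes R: "\<And>k. norm (x k) \<le> R"
  shows "\<exists>r. strict_mono r \<and> (\<forall>n. convergent (\<lambda>j. inner (x (r j)) (x n)))"
proof -
  interpret subseqs "\<lambda>n s. convergent (\<lambda>j. inner (x (s j)) (x n))"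
  proof
    fix n and s :: "nat \<Rightarrow> nat" assume s: "strict_mono s"
    have "bounded (range (\<lambda>j. inner (x (s j)) (x n)))"
    proof (rule boundedI)
      fix y assume "y \<in> range (\<lambda>j. inner (x (s j)) (x n))"
      then obtain j where y: "y = inner (x (s j)) (x n)" by auto
      have "norm y \<le> norm (x (s j)) * norm (x n)" unfolding y real_norm_def by (rule Cauchy_Schwarz_ineq2)
      also have "\<dots> \<le> R * R" using R by (intro mult_mono) (auto intro: order_trans[OF norm_ge_zero])
      finally show "norm y \<le> R * R" .
    qed
    from bounded_imp_convergent_subsequence[OF this] obtain l r where
      "strict_mono r" "((\<lambda>j. inner (x (s j)) (x n)) \<circ> r) \<longlonglongrightarrow> l" by blast
    then show "\<exists>r'. strict_mono r' \<and> convergent (\<lambda>j. inner (x ((s \<circ> r') j)) (x n))"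
      by (auto simp: convergent_def o_def)
  qed
  have "convergent (\<lambda>j. inner (x (diagseq j)) (x n))" for n
  proof -
    have "convergent (\<lambda>j. inner (x ((diagseq \<circ> (+) (Suc n)) j)) (x n))"
    proof (rule diagseq_holds)
      fix r s n assume "strict_mono (r :: nat \<Rightarrow> nat)" "convergent (\<lambda>j. inner (x (s j)) (x n))"
      then show "convergent (\<lambda>j. inner (x ((s \<circ> r) j)) (x n))"
        using LIMSEQ_subseq_LIMSEQ by (fastforce simp: convergent_def o_def)
    qed
    then obtain l where "(\<lambda>j. inner (x (diagseq (j + Suc n))) (x n)) \<longlonglongrightarrow> l"
      by (auto simp: convergent_def o_def add.commute)
    then have "(\<lambda>j. inner (x (diagseq j)) (x n)) \<longlonglongrightarrow> l" by (rule LIMSEQ_offset)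
    then show ?thesis by (auto simp: convergent_def)
  qed
  then show ?thesis using subseq_diagseq by blast
qed

lemma weak_compact:
  fixes x :: "nat \<Rightarrow> 'a::{real_inner,complete_space}"
  assumes R: "\<And>k. norm (x k) \<le> R"
  shows "\<exists>r p. strict_mono r \<and> (\<forall>d. (\<lambda>j. inner (x (r j)) d) \<longlonglongrightarrow> inner p d)"
proof -
  obtain r where r: "strict_mono r" "\<And>n. convergent (\<lambda>j. inner (x (r j)) (x n))"
    using diag_conv[of x R] R by blast
  define y where "y j = x (r j)" for j
  have R0: "R \<ge> 0" using R[of 0] norm_ge_zero order_trans by blast
  have yR: "norm (y j) \<le> R" for j unfolding y_def by (rule R)
  define V where "V = {d. convergent (\<lambda>j. inner (y j) d)}"
  have xV: "range x \<subseteq> V" using r(2) unfolding V_def y_def by auto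
  have sV: "subspace V"
    unfolding subspace_def V_def
  proof (intro conjI ballI allI; clarsimp)
    show "convergent (\<lambda>j. 0::real)" by (rule convergent_const)
  next
    fix a b assume "convergent (\<lambda>j. inner (y j) a)" "convergent (\<lambda>j. inner (y j) b)"
    then show "convergent (\<lambda>j. inner (y j) (a + b))"
      by (auto simp: convergent_def inner_add_right intro: tendsto_add)
  next
    fix c a assume "convergent (\<lambda>j. inner (y j) a)"
    then show "convergent (\<lambda>j. c * inner (y j) a)"
      by (auto simp: convergent_def intro: tendsto_mult_left)
  qed
  have cV: "closed V"
    unfolding closed_sequential_limits
  proof (intro allI impI, elim conjE)
    fix ds d assume ds: "\<forall>n. ds n \<in> V" and dl: "ds \<longlonglongrightarrow> d"
    have "Cauchy (\<lambda>j. inner (y j) d)"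
    proof (rule metric_CauchyI)
      fix e :: real assume e: "e > 0"
      have "\<forall>\<^sub>F n in sequentially. dist (ds n) d < e / (3 * (R + 1))"
        using dl e R0 by (auto simp: tendsto_iff)
      then obtain n where n: "dist (ds n) d < e / (3 * (R + 1))" using eventually_sequentially by auto
      have "Cauchy (\<lambda>j. inner (y j) (ds n))" using ds unfolding V_def by (simp add: Cauchy_convergent_iff)
      then obtain M where M: "\<And>i j. i \<ge> M \<Longrightarrow> j \<ge> M \<Longrightarrow> dist (inner (y i) (ds n)) (inner (y j) (ds n)) < e / 3"
        using e metric_CauchyD[of _ "e/3"] by (meson divide_pos_pos zero_less_numeral)
      have bnd: "\<bar>inner (y i) (ds n) - inner (y i) d\<bar> \<le> R * (e / (3 * (R + 1)))" for i
      proof -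
        have "\<bar>inner (y i) (ds n) - inner (y i) d\<bar> = \<bar>inner (y i) (ds n - d)\<bar>" by (simp add: inner_diff_right)
        also have "\<dots> \<le> norm (y i) * norm (ds n - d)" by (rule Cauchy_Schwarz_ineq2)
        also have "\<dots> \<le> R * (e / (3 * (R + 1)))"
          using n yR[of i] R0 by (intro mult_mono) (auto simp: dist_norm)
        finally show ?thesis .
      qed
      have small: "R * (e / (3 * (R + 1))) < e / 3" using R0 e by (simp add: field_simps)
      show "\<exists>M. \<forall>i\<ge>M. \<forall>j\<ge>M. dist (inner (y i) d) (inner (y j) d) < e"
      proof (intro exI allI impI)
        fix i j assume "M \<le> i" "M \<le> j"
        from M[OF this] bnd[of i] bnd[of j] small
        show "dist (inner (y i) d) (inner (y j) d) < e" by (simp add: dist_real_def abs_diff_less_iff) argo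
      qed
    qed
    then show "d \<in> V" unfolding V_def by (simp add: Cauchy_convergent_iff)
  qed
  define M where "M = \<Inter>{T. closed T \<and> subspace T \<and> range x \<subseteq> T}"
  have sM: "subspace M" unfolding M_def by (rule subspace_Inter) auto
  have cM: "closed M" unfolding M_def by (rule closed_Inter) auto
  have MV: "M \<subseteq> V" unfolding M_def using cV sV xV by auto
  have xM: "range x \<subseteq> M" unfolding M_def by auto
  have yM: "y j \<in> M" for j using xM unfolding y_def by auto
  define f where "f v = lim (\<lambda>j. inner (y j) v)" for v
  have fl: "(\<lambda>j. inner (y j) v) \<longlonglongrightarrow> f v" if "v \<in> M" for v
    using MV that unfolding V_def f_def by (auto simp: convergent_LIMSEQ_iff)
  have "\<exists>p\<in>M. \<forall>v\<in>M. f v = inner p v"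
  proof (rule riesz_subspace[OF sM cM _ _ _ R0])
    fix a b assume ab: "a \<in> M" "b \<in> M"
    have "(\<lambda>j. inner (y j) (a + b)) \<longlonglongrightarrow> f a + f b"
      using tendsto_add[OF fl[OF ab(1)] fl[OF ab(2)]] by (simp add: inner_add_right)
    moreover have "a + b \<in> M" using sM ab by (simp add: subspace_add)
    ultimately show "f (a + b) = f a + f b" using fl LIMSEQ_unique by blast
  next
    fix a c assume a: "a \<in> M"
    have "(\<lambda>j. inner (y j) (c *\<^sub>R a)) \<longlonglongrightarrow> c * f a"
      using tendsto_mult_left[OF fl[OF a], of c] by simp
    moreover have "c *\<^sub>R a \<in> M" using sM a by (simp add: subspace_scale)
    ultimately show "f (c *\<^sub>R a) = c * f a" using fl LIMSEQ_unique by blast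
  next
    fix a assume a: "a \<in> M"
    have "(\<lambda>j. \<bar>inner (y j) a\<bar>) \<longlonglongrightarrow> \<bar>f a\<bar>" using fl[OF a] by (rule tendsto_rabs)
    moreover have "\<bar>inner (y j) a\<bar> \<le> R * norm a" for j
      using Cauchy_Schwarz_ineq2[of "y j" a] yR[of j] by (meson mult_right_mono norm_ge_zero order_trans)
    ultimately show "\<bar>f a\<bar> \<le> R * norm a" by (intro LIMSEQ_le_const2) auto
  qed
  then obtain p where p: "p \<in> M" "\<And>v. v \<in> M \<Longrightarrow> f v = inner p v" by blast
  have "(\<lambda>j. inner (x (r j)) d) \<longlonglongrightarrow> inner p d" for d
  proof -
    obtain P where P: "P \<in> M" "\<And>v. v \<in> M \<Longrightarrow> inner (d - P) v = 0" using proj_subspace[OF sM cM] by blast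
    have e1: "inner (y j) d = inner (y j) P" for j
      using P(2)[OF yM[of j]] by (metis inner_commute inner_diff_right eq_iff_diff_eq_0)
    have e2: "inner p d = inner p P"
      using P(2)[OF p(1)] by (metis inner_commute inner_diff_right eq_iff_diff_eq_0)
    show ?thesis using fl[OF P(1)] p(2)[OF P(1)] unfolding e2 y_def[symmetric] e1 by simp
  qed
  then show ?thesis using r(1) by blast
qed

lemma not_tendsto_subseq:
  fixes f :: "nat \<Rightarrow> real"
  assumes "\<not> f \<longlonglongrightarrow> l"
  shows "\<exists>e>0. \<exists>s::nat\<Rightarrow>nat. strict_mono s \<and> (\<forall>j. e \<le> \<bar>f (s j) - l\<bar>)"
proof -
  from assms obtain e where e: "e > 0" "\<And>N. \<exists>n\<ge>N. \<not> dist (f n) l < e"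
    unfolding LIMSEQ_def by blast
  have "\<exists>n\<ge>N. n \<in> {n. e \<le> \<bar>f n - l\<bar>}" for N
  proof -
    obtain n where "n \<ge> N" "\<not> dist (f n) l < e" using e(2) by blast
    then show ?thesis by (intro exI[of _ n]) (simp add: dist_real_def)
  qed
  then have "infinite {n. e \<le> \<bar>f n - l\<bar>}"
    by (simp add: infinite_nat_iff_unbounded_le)
  from infinite_enumerate[OF this] obtain s :: "nat \<Rightarrow> nat" where
    "strict_mono s" "\<forall>n. s n \<in> {n. e \<le> \<bar>f n - l\<bar>}" by blast
  then have "\<exists>s::nat\<Rightarrow>nat. strict_mono s \<and> (\<forall>j. e \<le> \<bar>f (s j) - l\<bar>)" by auto
  then show ?thesis using e(1) by blast
qed

lemma opial:
  fixes x :: "nat \<Rightarrow> 'a::{real_inner,complete_space}"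
  assumes ne: "S \<noteq> {}"
    and lim: "\<And>p. p \<in> S \<Longrightarrow> convergent (\<lambda>k. (norm (x k - p))\<^sup>2)"
    and clus: "\<And>r q. strict_mono r \<Longrightarrow> (\<forall>d. (\<lambda>j. inner (x (r j)) d) \<longlonglongrightarrow> inner q d) \<Longrightarrow> q \<in> S"
  shows "\<exists>p\<in>S. weakly_converges x p"
proof -
  obtain p0 where p0: "p0 \<in> S" using ne by blast
  have "Bseq (\<lambda>k. (norm (x k - p0))\<^sup>2)" using lim[OF p0] by (rule convergent_imp_Bseq)
  then obtain K where K: "\<And>k. norm ((norm (x k - p0))\<^sup>2) \<le> K"
    unfolding Bseq_def by auto
  have R: "norm (x k) \<le> norm p0 + max 1 K" for k
  proof -
    have a: "norm (x k - p0) \<le> max 1 K"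
    proof (cases "norm (x k - p0) \<le> 1")
      case False
      then have "1 \<le> norm (x k - p0)" by simp
      then have "norm (x k - p0) \<le> (norm (x k - p0))\<^sup>2"
        using mult_left_mono[of 1 "norm (x k - p0)" "norm (x k - p0)"] by (simp add: power2_eq_square)
      also have "\<dots> \<le> K" using K[of k] by simp
      finally show ?thesis by simp
    qed simp
    have "norm (x k) \<le> norm p0 + norm (x k - p0)" by (rule norm_triangle_sub)
    then show ?thesis using a by simp
  qed
  define R' where "R' = norm p0 + max 1 K"
  have R': "\<And>k. norm (x k) \<le> R'" unfolding R'_def by (rule R)
  have conv_inner: "\<exists>c. (\<lambda>k. inner (x k) (q - p)) \<longlonglongrightarrow> c" if pq: "p \<in> S" "q \<in> S" for p q
  proof -
    obtain Lp where Lp: "(\<lambda>k. (norm (x k - p))\<^sup>2) \<longlonglongrightarrow> Lp"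
      using lim[OF pq(1)] unfolding convergent_def by blast
    obtain Lq where Lq: "(\<lambda>k. (norm (x k - q))\<^sup>2) \<longlonglongrightarrow> Lq"
      using lim[OF pq(2)] unfolding convergent_def by blast
    have eq: "inner (x k) (q - p) = ((norm (x k - p))\<^sup>2 - (norm (x k - q))\<^sup>2 - (norm p)\<^sup>2 + (norm q)\<^sup>2) / 2" for k
      by (simp add: power2_norm_eq_inner inner_diff_left inner_diff_right inner_commute algebra_simps)
    have "(\<lambda>k. ((norm (x k - p))\<^sup>2 - (norm (x k - q))\<^sup>2 - (norm p)\<^sup>2 + (norm q)\<^sup>2) / 2)
       \<longlonglongrightarrow> (Lp - Lq - (norm p)\<^sup>2 + (norm q)\<^sup>2) / 2"
      by (intro tendsto_divide tendsto_add tendsto_diff Lp Lq tendsto_const) simp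
    then show ?thesis unfolding eq by blast
  qed
  obtain r p where r: "strict_mono r" "\<And>d. (\<lambda>j. inner (x (r j)) d) \<longlonglongrightarrow> inner p d"
    using weak_compact[of x R', OF R'] by blast
  have pS: "p \<in> S" using r(2) by (intro clus[OF r(1)]) blast
  have "(\<lambda>k. inner (x k) d) \<longlonglongrightarrow> inner p d" for d
  proof (rule ccontr)
    assume "\<not> ?thesis"
    from not_tendsto_subseq[OF this] obtain e and s :: "nat \<Rightarrow> nat" where es: "e > 0" "strict_mono s"
      "\<And>j. e \<le> \<bar>inner (x (s j)) d - inner p d\<bar>" by blast
    obtain r' q where r': "strict_mono r'" "\<And>d. (\<lambda>j. inner (x (s (r' j))) d) \<longlonglongrightarrow> inner q d"
      using weak_compact[of "\<lambda>j. x (s j)" R', OF R'] by blast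
    have sr: "strict_mono (s \<circ> r')" using es(2) r'(1) by (rule strict_mono_o)
    have "\<forall>d. (\<lambda>j. inner (x ((s \<circ> r') j)) d) \<longlonglongrightarrow> inner q d" using r'(2) by (simp add: o_def)
    then have qS: "q \<in> S" by (rule clus[OF sr])
    have "(\<lambda>j. \<bar>inner (x (s (r' j))) d - inner p d\<bar>) \<longlonglongrightarrow> \<bar>inner q d - inner p d\<bar>"
      by (intro tendsto_rabs tendsto_diff r'(2) tendsto_const)
    then have "e \<le> \<bar>inner q d - inner p d\<bar>" using es(3) by (intro LIMSEQ_le_const) auto
    then have qp: "q \<noteq> p" using es(1) by auto
    obtain c where c: "(\<lambda>k. inner (x k) (q - p)) \<longlonglongrightarrow> c" using conv_inner[OF pS qS] by blast
    have "(\<lambda>j. inner (x (r j)) (q - p)) \<longlonglongrightarrow> c" using LIMSEQ_subseq_LIMSEQ[OF c r(1)] by (simp add: o_def)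
    then have c1: "c = inner p (q - p)" using r(2)[of "q - p"] by (rule LIMSEQ_unique)
    have "(\<lambda>j. inner (x ((s \<circ> r') j)) (q - p)) \<longlonglongrightarrow> c" using LIMSEQ_subseq_LIMSEQ[OF c sr] by (simp add: o_def)
    then have "(\<lambda>j. inner (x (s (r' j))) (q - p)) \<longlonglongrightarrow> c" by (simp add: o_def)
    then have c2: "c = inner q (q - p)" using r'(2)[of "q - p"] by (rule LIMSEQ_unique)
    have "inner (q - p) (q - p) = 0" using c1 c2 by (simp add: inner_diff_left)
    then show False using qp by simp
  qed
  then show ?thesis using pS unfolding weakly_converges_def by blast
qed

definition cross :: "'a::real_inner \<times> 'a \<times> real \<Rightarrow> 'a \<times> 'a \<times> real \<Rightarrow> real" where
  "cross b1 b2 = snd (snd b1) + snd (snd b2) - inner (fst b1) (fst (snd b2)) - inner (fst b2) (fst (snd b1))"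

lemma cross_sym: "cross b1 b2 = cross b2 b1"
  unfolding cross_def by simp

lemma convex_cross: "convex {b. 0 \<le> cross b0 b}"
proof (rule convexI)
  fix x y :: "'a \<times> 'a \<times> real" and u v :: real
  assume x: "x \<in> {b. 0 \<le> cross b0 b}" and y: "y \<in> {b. 0 \<le> cross b0 b}" and u: "0 \<le> u" and v: "0 \<le> v" and uv: "u + v = 1"
  have "cross b0 (u *\<^sub>R x + v *\<^sub>R y) = (u + v) * snd (snd b0) + u * snd (snd x) + v * snd (snd y)
      - u * inner (fst b0) (fst (snd x)) - v * inner (fst b0) (fst (snd y))
      - u * inner (fst x) (fst (snd b0)) - v * inner (fst y) (fst (snd b0))"
    unfolding cross_def using uv by (simp add: inner_add_left inner_add_right)
  also have "\<dots> = u * cross b0 x + v * cross b0 y" unfolding cross_def by (simp add: algebra_simps)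
  finally have eq: "cross b0 (u *\<^sub>R x + v *\<^sub>R y) = u * cross b0 x + v * cross b0 y" .
  have "0 \<le> u * cross b0 x + v * cross b0 y" using x y u v by simp
  then show "u *\<^sub>R x + v *\<^sub>R y \<in> {b. 0 \<le> cross b0 b}" using eq by simp
qed

lemma one_minus_t_le:
  fixes X Y :: real
  assumes "\<And>t. 0 < t \<Longrightarrow> t < 1 \<Longrightarrow> (1 - t) * X \<le> Y"
  shows "X \<le> Y"
proof (rule ccontr)
  assume "\<not> X \<le> Y"
  then have XY: "Y < X" by simp
  show False
  proof (cases "X \<le> 0")
    case True
    then have "(1 - 1/2) * X \<le> Y" using assms[of "1/2"] by simp
    then show False using True XY by simp
  next
    case False
    define t where "t = min (1/2) ((X - Y) / (2 * X))"
    have t0: "0 < t" unfolding t_def using False XY by simp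
    have t1: "t < 1" unfolding t_def by simp
    have "t \<le> (X - Y) / (2 * X)" unfolding t_def by simp
    then have "t * X \<le> (X - Y) / 2" using False by (simp add: field_simps)
    then have "Y < (1 - t) * X" using XY by (simp add: algebra_simps)
    then show False using assms[OF t0 t1] by simp
  qed
qed

lemma half_sq:
  fixes Y d :: "'a::real_inner"
  shows "(norm ((1/2) *\<^sub>R (Y + d)))\<^sup>2 - inner Y d = (norm ((1/2) *\<^sub>R (Y - d)))\<^sup>2"
  by (simp add: power2_norm_eq_inner inner_add_left inner_add_right inner_diff_left inner_diff_right inner_commute algebra_simps)

lemma ball_rel:
  fixes y d z :: "'a::real_inner"
  assumes "(norm ((1/2) *\<^sub>R (y + d) - z))\<^sup>2 \<le> (norm ((1/2) *\<^sub>R (y + d)))\<^sup>2 - inner y d"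
  shows "inner (z - y) (z - d) \<le> 0"
proof -
  have "(norm ((1/2) *\<^sub>R (y + d) - z))\<^sup>2 = (norm ((1/2) *\<^sub>R (y + d)))\<^sup>2 - inner y z - inner d z + (norm z)\<^sup>2"
    by (simp add: power2_norm_eq_inner inner_add_left inner_add_right inner_diff_left inner_diff_right inner_commute algebra_simps)
  moreover have "inner (z - y) (z - d) = (norm z)\<^sup>2 - inner y z - inner d z + inner y d"
    by (simp add: power2_norm_eq_inner inner_diff_left inner_diff_right inner_commute algebra_simps)
  ultimately show ?thesis using assms by simp
qed

lemma minty:
  fixes A :: "'a::{real_inner,complete_space} \<Rightarrow> 'a set"
  assumes maxA: "maximal_monotone A" and lam: "lam > 0"
  shows "\<exists>z u. u \<in> A z \<and> w = z + lam *\<^sub>R u"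
proof -
  have monA: "monotone_op A" using maxA unfolding maximal_monotone_def by simp
  have maxr: "A' = A" if "monotone_op A'" "\<And>x. A x \<subseteq> A' x" for A'
    using maxA that unfolding maximal_monotone_def by blast
  have mon: "0 \<le> inner (x - y) (u - v)" if "u \<in> A x" "v \<in> A y" for x y u v
    using monA that unfolding monotone_op_def by blast
  have gne: "\<exists>y v. v \<in> A y"
  proof (rule ccontr)
    assume "\<not> ?thesis"
    then have Ae: "A x = {}" for x by auto
    define A' where "A' = (\<lambda>x::'a. if x = 0 then {0::'a} else {})"
    have "monotone_op A'" unfolding monotone_op_def A'_def by simp
    moreover have "A x \<subseteq> A' x" for x using Ae by simp
    ultimately have "A' = A" by (rule maxr)
    then have "A' 0 = A 0" by simp
    then show False using Ae[of 0] unfolding A'_def by simp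
  qed
  define T where "T = {(y, v, inner y v) | y v. v \<in> A y}"
  define H where "H = convex hull T"
  have TH: "T \<subseteq> H" unfolding H_def by (rule hull_subset)
  have cvH: "convex H" unfolding H_def by (rule convex_convex_hull)
  have cross_T: "0 \<le> cross g b" if gb: "g \<in> T" "b \<in> T" for g b
  proof -
    obtain y1 v1 where g: "g = (y1, v1, inner y1 v1)" "v1 \<in> A y1" using gb(1) unfolding T_def by blast
    obtain y2 v2 where b: "b = (y2, v2, inner y2 v2)" "v2 \<in> A y2" using gb(2) unfolding T_def by blast
    have "cross g b = inner (y1 - y2) (v1 - v2)" unfolding g b cross_def
      by (simp add: inner_diff_left inner_diff_right inner_commute)
    then show ?thesis using mon[OF g(2) b(2)] by simp
  qed
  have cross_TH: "0 \<le> cross g b" if "g \<in> T" "b \<in> H" for g b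
  proof -
    have "H \<subseteq> {b. 0 \<le> cross g b}" unfolding H_def
    proof (rule hull_minimal)
      show "T \<subseteq> {b. 0 \<le> cross g b}" using cross_T that(1) by blast
      show "convex {b. 0 \<le> cross g b}" by (rule convex_cross)
    qed
    then show ?thesis using that(2) by auto
  qed
  have cross_HH: "0 \<le> cross b b" if "b \<in> H" for b
  proof -
    have "H \<subseteq> {b'. 0 \<le> cross b b'}" unfolding H_def
    proof (rule hull_minimal)
      show "T \<subseteq> {b'. 0 \<le> cross b b'}"
      proof
        fix b' assume b': "b' \<in> T"
        have "0 \<le> cross b' b" using cross_TH[OF b' that] .
        then show "b' \<in> {b'. 0 \<le> cross b b'}" by (simp add: cross_sym[of b'])
      qed
      show "convex {b'. 0 \<le> cross b b'}" by (rule convex_cross)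
    qed
    then show ?thesis using that by auto
  qed
  have keyH: "inner (fst b) (fst (snd b)) \<le> snd (snd b)" if "b \<in> H" for b
    using cross_HH[OF that] unfolding cross_def by (simp add: inner_commute)
  define mm where "mm b = (1/2) *\<^sub>R (fst b + w - lam *\<^sub>R fst (snd b))" for b :: "'a \<times> 'a \<times> real"
  define hh where "hh b = (norm (mm b))\<^sup>2 - inner (fst b) w + lam * snd (snd b)" for b :: "'a \<times> 'a \<times> real"
  have hh_nonneg: "0 \<le> hh b" if "b \<in> H" for b
  proof -
    define d where "d = w - lam *\<^sub>R fst (snd b)"
    have "lam * inner (fst b) (fst (snd b)) \<le> lam * snd (snd b)" using keyH[OF that] lam by simp
    moreover have "(norm (mm b))\<^sup>2 - inner (fst b) w + lam * inner (fst b) (fst (snd b)) = (norm ((1/2) *\<^sub>R (fst b - d)))\<^sup>2"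
    proof -
      have "mm b = (1/2) *\<^sub>R (fst b + d)" unfolding mm_def d_def by (simp add: algebra_simps)
      moreover have "inner (fst b) w - lam * inner (fst b) (fst (snd b)) = inner (fst b) d"
        unfolding d_def by (simp add: inner_diff_right)
      ultimately show ?thesis using half_sq[of "fst b" d] by simp
    qed
    ultimately show ?thesis unfolding hh_def by (smt (verit) zero_le_power2)
  qed
  have comb: "t *\<^sub>R b1 + (1 - t) *\<^sub>R b2 \<in> H \<and> mm (t *\<^sub>R b1 + (1 - t) *\<^sub>R b2) = t *\<^sub>R mm b1 + (1 - t) *\<^sub>R mm b2 \<and>
     hh (t *\<^sub>R b1 + (1 - t) *\<^sub>R b2) = t * hh b1 + (1 - t) * hh b2 - t * (1 - t) * (norm (mm b1 - mm b2))\<^sup>2"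
    if "b1 \<in> H" "b2 \<in> H" "0 \<le> t" "t \<le> 1" for b1 b2 t
  proof (intro conjI)
    show "t *\<^sub>R b1 + (1 - t) *\<^sub>R b2 \<in> H" using cvH that by (intro convexD) auto
    show mmc: "mm (t *\<^sub>R b1 + (1 - t) *\<^sub>R b2) = t *\<^sub>R mm b1 + (1 - t) *\<^sub>R mm b2"
    proof -
      let ?c = "t *\<^sub>R b1 + (1 - t) *\<^sub>R b2"
      have wsplit: "t *\<^sub>R w + (1 - t) *\<^sub>R w = w" by (simp flip: scaleR_add_left)
      have e1: "fst ?c + (t *\<^sub>R w + (1 - t) *\<^sub>R w) - lam *\<^sub>R fst (snd ?c)
          = t *\<^sub>R (fst b1 + w - lam *\<^sub>R fst (snd b1)) + (1 - t) *\<^sub>R (fst b2 + w - lam *\<^sub>R fst (snd b2))"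
        by (simp add: algebra_simps)
      have "mm ?c = (1/2) *\<^sub>R (fst ?c + (t *\<^sub>R w + (1 - t) *\<^sub>R w) - lam *\<^sub>R fst (snd ?c))"
        unfolding mm_def wsplit ..
      also have "\<dots> = t *\<^sub>R mm b1 + (1 - t) *\<^sub>R mm b2"
        unfolding e1 mm_def scaleR_add_right scaleR_scaleR by (simp add: mult.commute)
      finally show ?thesis .
    qed
    have "hh (t *\<^sub>R b1 + (1 - t) *\<^sub>R b2) = (norm (t *\<^sub>R mm b1 + (1 - t) *\<^sub>R mm b2))\<^sup>2
        - (t * inner (fst b1) w + (1 - t) * inner (fst b2) w) + lam * (t * snd (snd b1) + (1 - t) * snd (snd b2))"
      unfolding hh_def mmc by (simp add: inner_add_left)
    also have "\<dots> = t * hh b1 + (1 - t) * hh b2 - t * (1 - t) * (norm (mm b1 - mm b2))\<^sup>2"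
      unfolding norm_comb_sq hh_def by (simp add: algebra_simps)
    finally show "hh (t *\<^sub>R b1 + (1 - t) *\<^sub>R b2) = t * hh b1 + (1 - t) * hh b2 - t * (1 - t) * (norm (mm b1 - mm b2))\<^sup>2" .
  qed
  have Hne: "H \<noteq> {}" using gne TH unfolding T_def by blast
  have "\<exists>f l. (\<forall>n. f n \<in> H) \<and> (\<forall>c\<in>H. Inf (hh ` H) \<le> hh c) \<and>
     (\<lambda>n. hh (f n)) \<longlonglongrightarrow> Inf (hh ` H) \<and> (\<lambda>n. mm (f n)) \<longlonglongrightarrow> l"
  proof (rule cauchy_min[OF Hne hh_nonneg])
    fix a b assume ab: "a \<in> H" "b \<in> H"
    from comb[OF ab, of "1/2"] show "\<exists>c\<in>H. hh c \<le> (hh a + hh b) / 2 - (norm (mm a - mm b))\<^sup>2 / 4"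
      by (intro bexI[of _ "(1/2) *\<^sub>R a + (1 - 1/2) *\<^sub>R b"]) auto
  qed
  then obtain f z where f: "\<And>n. f n \<in> H" "\<And>c. c \<in> H \<Longrightarrow> Inf (hh ` H) \<le> hh c"
     "(\<lambda>n. hh (f n)) \<longlonglongrightarrow> Inf (hh ` H)" "(\<lambda>n. mm (f n)) \<longlonglongrightarrow> z" by blast
  define s where "s = Inf (hh ` H)"
  have s0: "0 \<le> s" unfolding s_def
    by (rule LIMSEQ_le_const[OF f(3)]) (use hh_nonneg[OF f(1)] in blast)
  have gen: "(norm (mm g - z))\<^sup>2 \<le> hh g" if g: "g \<in> T" for g
  proof -
    have gH: "g \<in> H" using g TH by auto
    have "(1 - t) * (norm (mm g - z))\<^sup>2 \<le> hh g - s" if t: "0 < t" "t < 1" for t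
    proof -
      have le: "s \<le> t * hh g + (1 - t) * hh (f n) - t * (1 - t) * (norm (mm g - mm (f n)))\<^sup>2" for n
      proof -
        have c: "t *\<^sub>R g + (1 - t) *\<^sub>R f n \<in> H"
          "hh (t *\<^sub>R g + (1 - t) *\<^sub>R f n) = t * hh g + (1 - t) * hh (f n) - t * (1 - t) * (norm (mm g - mm (f n)))\<^sup>2"
          using comb[OF gH f(1)[of n], of t] t by auto
        have "s \<le> hh (t *\<^sub>R g + (1 - t) *\<^sub>R f n)" unfolding s_def by (rule f(2)[OF c(1)])
        then show ?thesis unfolding c(2) .
      qed
      have "(\<lambda>n. t * hh g + (1 - t) * hh (f n) - t * (1 - t) * (norm (mm g - mm (f n)))\<^sup>2)
           \<longlonglongrightarrow> t * hh g + (1 - t) * s - t * (1 - t) * (norm (mm g - z))\<^sup>2"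
        using f(3) f(4) unfolding s_def by (intro tendsto_intros)
      then have "s \<le> t * hh g + (1 - t) * s - t * (1 - t) * (norm (mm g - z))\<^sup>2"
        using le by (intro LIMSEQ_le_const) auto
      then have "t * ((1 - t) * (norm (mm g - z))\<^sup>2) \<le> t * (hh g - s)" by (simp add: algebra_simps)
      then show ?thesis using t by simp
    qed
    then have "(norm (mm g - z))\<^sup>2 \<le> hh g - s" by (rule one_minus_t_le)
    then show ?thesis using s0 by simp
  qed
  define u0 where "u0 = (1 / lam) *\<^sub>R (w - z)"
  have wz: "w = z + lam *\<^sub>R u0" unfolding u0_def using lam by simp
  have rel: "0 \<le> inner (z - y) (u0 - v)" if v: "v \<in> A y" for y v
  proof -
    have g: "(y, v, inner y v) \<in> T" unfolding T_def using v by blast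
    have "inner (z - y) (z - (w - lam *\<^sub>R v)) \<le> 0"
    proof (rule ball_rel)
      have "mm (y, v, inner y v) = (1/2) *\<^sub>R (y + (w - lam *\<^sub>R v))" unfolding mm_def by (simp add: algebra_simps)
      moreover have "hh (y, v, inner y v) = (norm ((1/2) *\<^sub>R (y + (w - lam *\<^sub>R v))))\<^sup>2 - inner y (w - lam *\<^sub>R v)"
        unfolding hh_def calculation by (simp add: inner_diff_right)
      ultimately show "(norm ((1/2) *\<^sub>R (y + (w - lam *\<^sub>R v)) - z))\<^sup>2 \<le> (norm ((1/2) *\<^sub>R (y + (w - lam *\<^sub>R v))))\<^sup>2 - inner y (w - lam *\<^sub>R v)"
        using gen[OF g] by simp
    qed
    moreover have "z - (w - lam *\<^sub>R v) = lam *\<^sub>R (v - u0)" using wz by (simp add: algebra_simps)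
    ultimately have "lam * inner (z - y) (v - u0) \<le> 0" by simp
    then have "inner (z - y) (v - u0) \<le> 0" using lam by (simp add: mult_le_0_iff)
    then show ?thesis by (metis inner_minus_right minus_diff_eq neg_0_le_iff_le)
  qed
  define A' where "A' = (\<lambda>x. if x = z then insert u0 (A x) else A x)"
  have "monotone_op A'"
    unfolding monotone_op_def
  proof (intro allI impI)
    fix x y u v assume u: "u \<in> A' x" and v: "v \<in> A' y"
    show "0 \<le> inner (x - y) (u - v)"
    proof (cases "x = z \<and> u = u0")
      case True
      then show ?thesis
      proof (cases "y = z \<and> v = u0")
        case False
        then have "v \<in> A y" using v unfolding A'_def by (auto split: if_splits)
        then show ?thesis using rel True by blast
      qed simp
    next
      case False
      then have u': "u \<in> A x" using u unfolding A'_def by (auto split: if_splits)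
      show ?thesis
      proof (cases "y = z \<and> v = u0")
        case True
        have "0 \<le> inner (z - x) (u0 - u)" using rel[OF u'] .
        then show ?thesis using True by (metis inner_minus_left inner_minus_right minus_diff_eq minus_minus)
      next
        case False
        then have "v \<in> A y" using v unfolding A'_def by (auto split: if_splits)
        then show ?thesis using mon u' by blast
      qed
    qed
  qed
  moreover have "A x \<subseteq> A' x" for x unfolding A'_def by auto
  ultimately have "A' = A" by (rule maxr)
  then have "A' z = A z" by simp
  then have "u0 \<in> A z" unfolding A'_def by (simp add: insert_absorb2) blast
  then show ?thesis using wz by blast
qed

lemma resolvent_char:
  fixes A :: "'a::{real_inner,complete_space} \<Rightarrow> 'a set"
  assumes maxA: "maximal_monotone A" and lam: "lam > 0"
  shows "\<exists>u\<in>A (resolvent lam A w). w = resolvent lam A w + lam *\<^sub>R u"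
proof -
  obtain z u where zu: "u \<in> A z" "w = z + lam *\<^sub>R u" using minty[OF maxA lam] by blast
  have monA: "monotone_op A" using maxA unfolding maximal_monotone_def by simp
  have uniq: "z' = z" if "u' \<in> A z'" "w = z' + lam *\<^sub>R u'" for z' u'
  proof -
    have m: "0 \<le> inner (z - z') (u - u')" using monA zu(1) that(1) unfolding monotone_op_def by blast
    have "lam *\<^sub>R (u - u') = z' - z" using zu(2) that(2) by (simp add: algebra_simps)
    then have "u - u' = (1 / lam) *\<^sub>R (z' - z)" using lam by (metis divideR_right less_irrefl scaleR_eq_0_iff divide_inverse_commute mult_1 inverse_eq_divide)
    then have "0 \<le> (1 / lam) * inner (z - z') (z' - z)" using m by simp
    then have "0 \<le> inner (z - z') (z' - z)" using lam by (auto simp: zero_le_divide_iff)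
    moreover have "inner (z - z') (z' - z) = - (norm (z - z'))\<^sup>2"
      by (metis inner_minus_right minus_diff_eq power2_norm_eq_inner)
    ultimately show ?thesis by simp
  qed
  have "resolvent lam A w = z"
    unfolding resolvent_def
  proof (rule the_equality)
    show "\<exists>u\<in>A z. w = z + lam *\<^sub>R u" using zu by blast
    show "\<And>z'. \<exists>u\<in>A z'. w = z' + lam *\<^sub>R u \<Longrightarrow> z' = z" using uniq by blast
  qed
  then show ?thesis using zu by blast
qed

lemma bounded_times_zero:
  fixes g :: "nat \<Rightarrow> real"
  assumes "\<And>k. \<bar>g k\<bar> \<le> C * norm (rr k)" and "rr \<longlonglongrightarrow> 0"
  shows "g \<longlonglongrightarrow> 0"
proof (rule tendsto_sandwich[of "\<lambda>k. - (C * norm (rr k))" _ _ "\<lambda>k. C * norm (rr k)"])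
  show "\<forall>\<^sub>F n in sequentially. - (C * norm (rr n)) \<le> g n" using assms(1) by (intro always_eventually allI) (metis abs_le_iff minus_le_iff)
  show "\<forall>\<^sub>F n in sequentially. g n \<le> C * norm (rr n)" using assms(1) by (intro always_eventually allI) (metis abs_le_iff)
  have "(\<lambda>k. C * norm (rr k)) \<longlonglongrightarrow> C * 0" using assms(2) by (intro tendsto_intros) (simp add: tendsto_norm_zero)
  then show "(\<lambda>k. C * norm (rr k)) \<longlonglongrightarrow> 0" by simp
  then show "(\<lambda>k. - (C * norm (rr k))) \<longlonglongrightarrow> 0" using tendsto_minus by fastforce
qed

lemma cluster:
  fixes A :: "'a::{real_inner,complete_space} \<Rightarrow> 'a set" and B :: "'a \<Rightarrow> 'a"
  assumes maxA: "maximal_monotone A" and L: "L > 0"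
    and monB: "\<And>x y. 0 \<le> inner (x - y) (B x - B y)"
    and lip: "\<And>x y. norm (B x - B y) \<le> L * norm (x - y)"
    and as: "\<And>k. as k \<in> A (zs k)"
    and zx: "(\<lambda>k. zs k - xs k) \<longlonglongrightarrow> 0"
    and ab: "(\<lambda>k. as k + B (zs k)) \<longlonglongrightarrow> 0"
    and r: "strict_mono r"
    and wk: "\<And>d. (\<lambda>j. inner (xs (r j)) d) \<longlonglongrightarrow> inner q d"
    and bnd: "\<And>k. norm (xs k) \<le> R"
  shows "q \<in> zeros_sum A B"
proof -
  have monA: "monotone_op A" using maxA unfolding maximal_monotone_def by simp
  define g where "g = 1 / (2 * L)"
  have g0: "g > 0" unfolding g_def using L by simp
  obtain y0 u0 where yu: "u0 \<in> A y0" "q - g *\<^sub>R B q = y0 + g *\<^sub>R u0" using minty[OF maxA g0] by blast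
  define dv where "dv = - B y0 - u0"
  define rr where "rr k = as k + B (zs k)" for k
  have ineq: "0 \<le> inner (zs k - y0) dv + inner (zs k - y0) (rr k)" for k
  proof -
    have "0 \<le> inner (zs k - y0) (as k - u0)" using monA as yu(1) unfolding monotone_op_def by blast
    moreover have "0 \<le> inner (zs k - y0) (B (zs k) - B y0)" by (rule monB)
    moreover have "inner (zs k - y0) dv + inner (zs k - y0) (rr k) = inner (zs k - y0) (as k - u0) + inner (zs k - y0) (B (zs k) - B y0)"
      unfolding dv_def rr_def by (simp add: inner_add_right inner_diff_right)
    ultimately show ?thesis by simp
  qed
  have l1: "(\<lambda>j. inner (zs (r j) - y0) dv) \<longlonglongrightarrow> inner (q - y0) dv"
  proof -
    have "(\<lambda>j. zs (r j) - xs (r j)) \<longlonglongrightarrow> 0" using LIMSEQ_subseq_LIMSEQ[OF zx r] by (simp add: o_def)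
    then have "(\<lambda>j. inner (zs (r j) - xs (r j)) dv) \<longlonglongrightarrow> inner 0 dv" by (intro tendsto_intros)
    then have "(\<lambda>j. inner (xs (r j)) dv + inner (zs (r j) - xs (r j)) dv - inner y0 dv) \<longlonglongrightarrow> inner q dv + inner 0 dv - inner y0 dv"
      by (intro tendsto_diff tendsto_add wk tendsto_const)
    then show ?thesis by (simp add: inner_diff_left)
  qed
  have l2: "(\<lambda>j. inner (zs (r j) - y0) (rr (r j))) \<longlonglongrightarrow> 0"
  proof -
    have rr0: "rr \<longlonglongrightarrow> 0" unfolding rr_def by (rule ab)
    have a: "(\<lambda>k. inner (zs k - xs k) (rr k)) \<longlonglongrightarrow> 0"
      using tendsto_inner[OF zx rr0] by simp
    have b: "(\<lambda>k. inner (xs k - y0) (rr k)) \<longlonglongrightarrow> 0"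
    proof (rule bounded_times_zero[OF _ rr0])
      fix k
      have "\<bar>inner (xs k - y0) (rr k)\<bar> \<le> norm (xs k - y0) * norm (rr k)" by (rule Cauchy_Schwarz_ineq2)
      also have "\<dots> \<le> (R + norm y0) * norm (rr k)"
        using bnd[of k] norm_triangle_ineq4[of "xs k" y0] by (intro mult_right_mono) auto
      finally show "\<bar>inner (xs k - y0) (rr k)\<bar> \<le> (R + norm y0) * norm (rr k)" .
    qed
    have "(\<lambda>k. inner (zs k - y0) (rr k)) \<longlonglongrightarrow> 0"
    proof -
      have "(\<lambda>k. inner (zs k - xs k) (rr k) + inner (xs k - y0) (rr k)) \<longlonglongrightarrow> 0 + 0" by (intro tendsto_add a b)
      then show ?thesis by (simp add: inner_diff_left)
    qed
    from LIMSEQ_subseq_LIMSEQ[OF this r] show ?thesis by (simp add: o_def)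
  qed
  have "0 \<le> inner (q - y0) dv + 0"
    by (rule LIMSEQ_le_const[OF tendsto_add[OF l1 l2]]) (use ineq in auto)
  then have i1: "0 \<le> inner (q - y0) dv" by simp
  have u0e: "g *\<^sub>R u0 = q - g *\<^sub>R B q - y0" using yu(2) by simp
  have "0 \<le> g * inner (q - y0) dv" using i1 g0 by simp
  also have "g * inner (q - y0) dv = inner (q - y0) (g *\<^sub>R (B q - B y0)) - (norm (q - y0))\<^sup>2"
  proof -
    have "g *\<^sub>R dv = g *\<^sub>R (B q - B y0) - (q - y0)" unfolding dv_def using u0e by (simp add: algebra_simps)
    then have "inner (q - y0) (g *\<^sub>R dv) = inner (q - y0) (g *\<^sub>R (B q - B y0)) - inner (q - y0) (q - y0)"
      by (simp add: inner_diff_right)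
    then show ?thesis by (simp add: power2_norm_eq_inner)
  qed
  finally have i2: "(norm (q - y0))\<^sup>2 \<le> g * inner (q - y0) (B q - B y0)" by simp
  have "inner (q - y0) (B q - B y0) \<le> norm (q - y0) * norm (B q - B y0)" by (rule norm_cauchy_schwarz)
  also have "\<dots> \<le> norm (q - y0) * (L * norm (q - y0))" by (intro mult_left_mono lip) simp
  finally have "inner (q - y0) (B q - B y0) \<le> L * (norm (q - y0))\<^sup>2"
    by (simp add: power2_eq_square algebra_simps)
  then have "g * inner (q - y0) (B q - B y0) \<le> g * (L * (norm (q - y0))\<^sup>2)"
    using g0 by (intro mult_left_mono) auto
  also have "g * (L * (norm (q - y0))\<^sup>2) = (norm (q - y0))\<^sup>2 / 2" unfolding g_def using L by simp
  finally have i4: "g * inner (q - y0) (B q - B y0) \<le> (norm (q - y0))\<^sup>2 / 2" .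
  have "(norm (q - y0))\<^sup>2 \<le> 0" using i2 i4 by linarith
  then have qy: "q = y0" by simp
  have "g *\<^sub>R u0 = g *\<^sub>R (- B q)" using u0e qy by simp
  then have "u0 = - B q" using g0 by (metis less_irrefl scaleR_cancel_left)
  then have "u0 \<in> A q \<and> u0 + B q = 0" using yu(1) qy by simp
  then show ?thesis unfolding zeros_sum_def by blast
qed

lemma core_ident:
  fixes a b c eb ec :: "'a::real_inner"
  shows "bt*((norm a)\<^sup>2 - (norm b)\<^sup>2 - al*((norm b)\<^sup>2 - (norm c)\<^sup>2)) + 2*lam*bt*(inner b eb - inner c ec)
    + 2*lam*bt*(inner (a-b) eb - inner (b-c) ec) + 2*lam*bt^2*inner b eb
    = -2 * inner (a - (1-bt) *\<^sub>R b) (-(a - b) + al *\<^sub>R (b - c) - (lam*(1+bt)) *\<^sub>R eb + lam *\<^sub>R ec)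
      - (2-bt)*(norm (a-b))\<^sup>2 + 2*al*inner (a-b) (b-c) - 2*lam*inner (a-b) (eb - ec) + al*bt*(norm (b-c))\<^sup>2"
  unfolding power2_norm_eq_inner
  by (simp add: inner_add_left inner_add_right inner_diff_left inner_diff_right
      inner_commute algebra_simps power2_eq_square)


lemma lin_comb:
  fixes X F N1 N2 I J :: real
  assumes "X = -2*F - (2-bt)*N1 + 2*al*I - 2*lam*J + al*bt*N2" "0 \<le> F"
    "2*al*I - 2*lam*J \<le> (al+m)*(N1+N2)"
  shows "X \<le> -(2-bt-al-m)*N1 + (al+m+al*bt)*N2"
proof -
  have "-(2-bt-al-m)*N1 + (al+m+al*bt)*N2 - X = 2*F + ((al+m)*(N1+N2) - (2*al*I - 2*lam*J))"
    using assms(1) by (simp add: algebra_simps)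
  then show ?thesis using assms(2,3) by simp
qed

lemma core_step:
  fixes a b c eb ec :: "'a::real_inner"
  assumes fund: "0 \<le> inner (a - (1-bt) *\<^sub>R b) (-(a - b) + al *\<^sub>R (b - c) - (lam*(1+bt)) *\<^sub>R eb + lam *\<^sub>R ec)"
    and H: "2*al*inner (a-b) (b-c) - 2*lam*inner (a-b) (eb - ec) \<le> (al + m) * ((norm (a-b))\<^sup>2 + (norm (b-c))\<^sup>2)"
  shows "bt*((norm a)\<^sup>2 - (norm b)\<^sup>2 - al*((norm b)\<^sup>2 - (norm c)\<^sup>2)) + 2*lam*bt*(inner b eb - inner c ec)
    + 2*lam*bt*(inner (a-b) eb - inner (b-c) ec) + 2*lam*bt^2*inner b eb
    \<le> -(2-bt-al-m)*(norm (a-b))\<^sup>2 + (al+m+al*bt)*(norm (b-c))\<^sup>2"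
  by (rule lin_comb[OF core_ident fund H])

lemma lyap:
  fixes Phi h D psi :: "nat \<Rightarrow> real"
  assumes bt: "bt > 0" and rho: "0 \<le> rho" "rho < 1" and eps: "eps > 0" and c2: "c2 > 0"
    and desc: "\<And>n. Phi (Suc n) + eps * D (Suc n) + c2 * psi (Suc n) \<le> Phi n"
    and low: "\<And>n. bt * (h (Suc n) - rho * h n) \<le> Phi n"
    and h0: "\<And>n. 0 \<le> h n" and D0: "\<And>n. 0 \<le> D n" and p0: "\<And>n. 0 \<le> psi n"
  shows "\<exists>M. \<forall>n. h n \<le> M" "D \<longlonglongrightarrow> 0" "psi \<longlonglongrightarrow> 0" "convergent Phi"
proof -
  have dec: "Phi (Suc n) \<le> Phi n" for n
  proof -
    have "0 \<le> eps * D (Suc n)" using eps D0[of "Suc n"] by simp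
    moreover have "0 \<le> c2 * psi (Suc n)" using c2 p0[of "Suc n"] by simp
    ultimately show ?thesis using desc[of n] by linarith
  qed
  have decN: "Phi n \<le> Phi 0" for n
    by (induction n) (use dec order_trans in auto)
  define M where "M = max (h 0) (Phi 0 / (bt * (1 - rho)))"
  have hM: "h n \<le> M" for n
  proof (induction n)
    case 0 then show ?case unfolding M_def by simp
  next
    case (Suc n)
    have "bt * h (Suc n) \<le> bt * (rho * h n) + Phi n" using low[of n] by (simp add: algebra_simps)
    also have "\<dots> \<le> bt * (rho * M) + Phi 0"
      using Suc decN[of n] rho bt by (intro add_mono mult_left_mono) auto
    also have "Phi 0 \<le> bt * ((1 - rho) * M)"
    proof -
      have "Phi 0 / (bt * (1 - rho)) \<le> M" unfolding M_def by simp
      then show ?thesis using bt rho by (simp add: divide_le_eq algebra_simps)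
    qed
    then have "bt * (rho * M) + Phi 0 \<le> bt * M" by (simp add: algebra_simps)
    finally show ?case using bt by simp
  qed
  then show "\<exists>M. \<forall>n. h n \<le> M" by blast
  have Phil: "- (bt * rho * M) \<le> Phi n" for n
  proof -
    have "rho * h n \<le> rho * M" using hM rho by (intro mult_left_mono) auto
    then have "bt * (rho * h n) \<le> bt * (rho * M)" by (rule mult_left_mono) (use bt in auto)
    moreover have "0 \<le> bt * h (Suc n)" using h0[of "Suc n"] bt by simp
    ultimately have "- (bt * rho * M) \<le> bt * (h (Suc n) - rho * h n)"
      by (simp add: algebra_simps)
    then show ?thesis using low[of n] by simp
  qed
  define g where "g k = eps * D (Suc k) + c2 * psi (Suc k)" for k
  have g0: "0 \<le> g k" for k unfolding g_def using eps c2 D0 p0 by simp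
  have psum: "(\<Sum>k<N. g k) \<le> Phi 0 - Phi N" for N
  proof (induction N)
    case (Suc N)
    then show ?case using desc[of N] unfolding g_def by simp
  qed simp
  have "summable g"
  proof (rule summableI_nonneg_bounded[OF g0])
    fix N show "(\<Sum>k<N. g k) \<le> Phi 0 + bt * rho * M" using psum[of N] Phil[of N] by simp
  qed
  then have gl: "g \<longlonglongrightarrow> 0" by (rule summable_LIMSEQ_zero)
  have "(\<lambda>k. D (Suc k)) \<longlonglongrightarrow> 0"
  proof (rule tendsto_sandwich[of "\<lambda>k. 0" _ _ "\<lambda>k. g k / eps"])
    show "\<forall>\<^sub>F n in sequentially. 0 \<le> D (Suc n)" using D0 by simp
    show "\<forall>\<^sub>F n in sequentially. D (Suc n) \<le> g n / eps"
      using eps c2 p0 unfolding g_def by (intro always_eventually allI) (simp add: field_simps)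
    show "(\<lambda>k. 0) \<longlonglongrightarrow> (0::real)" by simp
    show "(\<lambda>k. g k / eps) \<longlonglongrightarrow> 0" using tendsto_divide[OF gl tendsto_const[of eps]] eps by simp
  qed
  then show "D \<longlonglongrightarrow> 0" by (rule LIMSEQ_imp_Suc)
  have "(\<lambda>k. psi (Suc k)) \<longlonglongrightarrow> 0"
  proof (rule tendsto_sandwich[of "\<lambda>k. 0" _ _ "\<lambda>k. g k / c2"])
    show "\<forall>\<^sub>F n in sequentially. 0 \<le> psi (Suc n)" using p0 by simp
    show "\<forall>\<^sub>F n in sequentially. psi (Suc n) \<le> g n / c2"
      using eps c2 D0 unfolding g_def by (intro always_eventually allI) (simp add: field_simps)
    show "(\<lambda>k. 0) \<longlonglongrightarrow> (0::real)" by simp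
    show "(\<lambda>k. g k / c2) \<longlonglongrightarrow> 0" using tendsto_divide[OF gl tendsto_const[of c2]] c2 by simp
  qed
  then show "psi \<longlonglongrightarrow> 0" by (rule LIMSEQ_imp_Suc)
  have "Bseq Phi"
  proof (rule BseqI')
    fix n show "norm (Phi n) \<le> \<bar>Phi 0\<bar> + \<bar>bt * rho * M\<bar>" using decN[of n] Phil[of n] by simp
  qed
  moreover have "monoseq Phi" unfolding monoseq_Suc using dec by blast
  ultimately show "convergent Phi" by (rule Bseq_monoseq_convergent)
qed

lemma conv_h:
  fixes Phi h :: "nat \<Rightarrow> real"
  assumes al: "0 \<le> al" "al < 1" and bt: "bt > 0" and cP: "convergent Phi"
    and d1: "(\<lambda>n. Phi n - bt * (h (Suc n) - al * h n)) \<longlonglongrightarrow> 0"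
    and d2: "(\<lambda>n. h (Suc n) - h n) \<longlonglongrightarrow> 0"
  shows "convergent h"
proof -
  obtain l where l: "Phi \<longlonglongrightarrow> l" using cP by (auto simp: convergent_def)
  have "(\<lambda>n. (Phi n - (Phi n - bt * (h (Suc n) - al * h n))) / bt) \<longlonglongrightarrow> (l - 0) / bt"
    by (intro tendsto_intros l d1) (use bt in simp)
  then have a: "(\<lambda>n. h (Suc n) - al * h n) \<longlonglongrightarrow> l / bt" using bt by simp
  have "(\<lambda>n. ((h (Suc n) - al * h n) - al * (h (Suc n) - h n)) / (1 - al)) \<longlonglongrightarrow> (l / bt - al * 0) / (1 - al)"
    by (intro tendsto_intros a d2) (use al in simp)
  moreover have "((h (Suc n) - al * h n) - al * (h (Suc n) - h n)) / (1 - al) = h (Suc n)" for n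
    using al by (simp add: field_simps)
  ultimately have "(\<lambda>n. h (Suc n)) \<longlonglongrightarrow> (l / bt) / (1 - al)" by simp
  then show ?thesis using LIMSEQ_imp_Suc convergent_def by blast
qed

lemma desc_comb:
  fixes A2 B2 C2 pb pc xa xb N1 N2 :: real
  assumes core: "bt*(A2 - B2 - al*(B2 - C2)) + 2*lam*bt*(pb - pc) + 2*lam*bt*(xa - xb) + 2*lam*bt^2*pb
      \<le> -(2-bt-al-m)*N2 + (al+m+al*bt)*N1"
  shows "(bt*(A2 - al*B2) + 2*lam*bt*pb + 2*lam*bt*xa + (al+m+al*bt)*N2)
      + (2 - bt - 2*al - al*bt - 2*m)*N2 + (2*lam*bt^2)*pb
      \<le> bt*(B2 - al*C2) + 2*lam*bt*pc + 2*lam*bt*xb + (al+m+al*bt)*N1"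
proof -
  have "bt*(B2 - al*C2) + 2*lam*bt*pc + 2*lam*bt*xb + (al+m+al*bt)*N1
      - ((bt*(A2 - al*B2) + 2*lam*bt*pb + 2*lam*bt*xa + (al+m+al*bt)*N2)
      + (2 - bt - 2*al - al*bt - 2*m)*N2 + (2*lam*bt^2)*pb)
      = (-(2-bt-al-m)*N2 + (al+m+al*bt)*N1) - (bt*(A2 - B2 - al*(B2 - C2)) + 2*lam*bt*(pb - pc) + 2*lam*bt*(xa - xb) + 2*lam*bt^2*pb)"
    by (simp add: algebra_simps)
  then show ?thesis using core by simp
qed

lemma per_p:
  fixes u e :: "nat \<Rightarrow> 'a::real_inner"
  assumes al: "0 \<le> al" "al < 1" and bt: "0 < bt" "bt \<le> 1" and lam: "lam > 0" and L: "L > 0"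
    and m: "m \<ge> 0" and eps: "2 - bt - 2*al - al*bt - 2*m > 0"
    and rho: "0 \<le> rho" "rho < 1"
    and fund: "\<And>n. 0 \<le> inner (u (Suc (Suc n)) - (1-bt) *\<^sub>R u (Suc n))
        (-(u (Suc (Suc n)) - u (Suc n)) + al *\<^sub>R (u (Suc n) - u n) - (lam*(1+bt)) *\<^sub>R e (Suc n) + lam *\<^sub>R e n)"
    and H: "\<And>n. 2*al*inner (u (Suc (Suc n)) - u (Suc n)) (u (Suc n) - u n)
        - 2*lam*inner (u (Suc (Suc n)) - u (Suc n)) (e (Suc n) - e n)
        \<le> (al + m) * ((norm (u (Suc (Suc n)) - u (Suc n)))\<^sup>2 + (norm (u (Suc n) - u n))\<^sup>2)"
    and low: "\<And>n. bt*((norm (u (Suc n)))\<^sup>2 - rho*(norm (u n))\<^sup>2) \<le>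
        bt*((norm (u (Suc n)))\<^sup>2 - al*(norm (u n))\<^sup>2) + 2*lam*bt*inner (u n) (e n)
        + 2*lam*bt*inner (u (Suc n) - u n) (e n) + (al+m+al*bt)*(norm (u (Suc n) - u n))\<^sup>2"
    and psi0: "\<And>n. 0 \<le> inner (u n) (e n)"
    and eb: "\<And>n. norm (e n) \<le> L * norm (u n)"
  shows "convergent (\<lambda>n. (norm (u n))\<^sup>2)" "(\<lambda>n. u (Suc n) - u n) \<longlonglongrightarrow> 0"
proof -
  define kap where "kap = al+m+al*bt"
  define Phi where "Phi n = bt*((norm (u (Suc n)))\<^sup>2 - al*(norm (u n))\<^sup>2) + 2*lam*bt*inner (u n) (e n)
        + 2*lam*bt*inner (u (Suc n) - u n) (e n) + kap*(norm (u (Suc n) - u n))\<^sup>2" for n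
  define D where "D n = (norm (u (Suc n) - u n))\<^sup>2" for n
  define h where "h n = (norm (u n))\<^sup>2" for n
  define psi where "psi n = inner (u n) (e n)" for n
  define ep where "ep = 2 - bt - 2*al - al*bt - 2*m"
  have desc: "Phi (Suc n) + ep * D (Suc n) + (2*lam*bt^2) * psi (Suc n) \<le> Phi n" for n
  proof -
    have c: "bt*((norm (u (Suc (Suc n))))\<^sup>2 - (norm (u (Suc n)))\<^sup>2 - al*((norm (u (Suc n)))\<^sup>2 - (norm (u n))\<^sup>2))
      + 2*lam*bt*(inner (u (Suc n)) (e (Suc n)) - inner (u n) (e n))
      + 2*lam*bt*(inner (u (Suc (Suc n)) - u (Suc n)) (e (Suc n)) - inner (u (Suc n) - u n) (e n))
      + 2*lam*bt^2*inner (u (Suc n)) (e (Suc n))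
      \<le> -(2-bt-al-m)*(norm (u (Suc (Suc n)) - u (Suc n)))\<^sup>2 + (al+m+al*bt)*(norm (u (Suc n) - u n))\<^sup>2"
      by (rule core_step[OF fund H])
    show ?thesis unfolding Phi_def D_def psi_def ep_def kap_def by (rule desc_comb[OF c])
  qed
  have lowP: "bt * (h (Suc n) - rho * h n) \<le> Phi n" for n
    using low[of n] unfolding Phi_def h_def kap_def by simp
  have h0: "0 \<le> h n" for n unfolding h_def by simp
  have D0: "0 \<le> D n" for n unfolding D_def by simp
  have p0: "0 \<le> psi n" for n unfolding psi_def by (rule psi0)
  have ep0: "ep > 0" unfolding ep_def using eps .
  have c20: "2*lam*bt^2 > 0" using lam bt by simp
  obtain M where M: "\<And>n. h n \<le> M" and Dl: "D \<longlonglongrightarrow> 0" and pl: "psi \<longlonglongrightarrow> 0" and cP: "convergent Phi"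
    using lyap[of bt rho ep "2*lam*bt^2" Phi D psi h, OF bt(1) rho ep0 c20 desc lowP h0 D0 p0] by blast
  define K where "K = max 1 M"
  have uK: "norm (u n) \<le> K" for n
  proof (cases "norm (u n) \<le> 1")
    case False
    then have "1 \<le> norm (u n)" by simp
    then have "norm (u n) \<le> (norm (u n))\<^sup>2"
      using mult_left_mono[of 1 "norm (u n)" "norm (u n)"] by (simp add: power2_eq_square)
    also have "\<dots> \<le> M" using M[of n] unfolding h_def .
    finally show ?thesis unfolding K_def by simp
  qed (simp add: K_def)
  have K0: "0 \<le> K" unfolding K_def by simp
  have Dn: "(\<lambda>n. norm (u (Suc n) - u n)) \<longlonglongrightarrow> 0"
  proof -
    have "(\<lambda>n. sqrt (D n)) \<longlonglongrightarrow> sqrt 0" by (intro tendsto_intros Dl)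
    then show ?thesis unfolding D_def by simp
  qed
  then show dl: "(\<lambda>n. u (Suc n) - u n) \<longlonglongrightarrow> 0" by (simp add: tendsto_norm_zero_iff)
  have x1: "(\<lambda>n. inner (u (Suc n) - u n) (e n)) \<longlonglongrightarrow> 0"
  proof (rule bounded_times_zero[OF _ dl])
    fix n
    have "\<bar>inner (u (Suc n) - u n) (e n)\<bar> \<le> norm (u (Suc n) - u n) * norm (e n)" by (rule Cauchy_Schwarz_ineq2)
    also have "\<dots> \<le> norm (u (Suc n) - u n) * (L * K)"
    proof (rule mult_left_mono)
      show "norm (e n) \<le> L * K" using eb[of n] uK[of n] L by (meson mult_left_mono less_imp_le order_trans)
    qed simp
    finally show "\<bar>inner (u (Suc n) - u n) (e n)\<bar> \<le> L * K * norm (u (Suc n) - u n)" by (simp add: mult.commute)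
  qed
  have d1: "(\<lambda>n. Phi n - bt * (h (Suc n) - al * h n)) \<longlonglongrightarrow> 0"
  proof -
    have "(\<lambda>n. 2*lam*bt*psi n + 2*lam*bt*inner (u (Suc n) - u n) (e n) + kap * D n) \<longlonglongrightarrow> 2*lam*bt*0 + 2*lam*bt*0 + kap*0"
      by (intro tendsto_intros pl x1 Dl)
    moreover have "Phi n - bt * (h (Suc n) - al * h n) = 2*lam*bt*psi n + 2*lam*bt*inner (u (Suc n) - u n) (e n) + kap * D n" for n
      unfolding Phi_def h_def psi_def D_def by (simp add: algebra_simps)
    ultimately show ?thesis by simp
  qed
  have d2: "(\<lambda>n. h (Suc n) - h n) \<longlonglongrightarrow> 0"
  proof (rule bounded_times_zero[OF _ dl])
    fix n
    have "h (Suc n) - h n = inner (u (Suc n) - u n) (u (Suc n) + u n)"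
      unfolding h_def by (simp add: power2_norm_eq_inner inner_add_right inner_diff_left inner_diff_right inner_commute)
    then have "\<bar>h (Suc n) - h n\<bar> \<le> norm (u (Suc n) - u n) * norm (u (Suc n) + u n)"
      by (simp add: Cauchy_Schwarz_ineq2)
    also have "\<dots> \<le> norm (u (Suc n) - u n) * (2 * K)"
    proof (rule mult_left_mono)
      show "norm (u (Suc n) + u n) \<le> 2 * K" using norm_triangle_ineq[of "u (Suc n)" "u n"] uK[of n] uK[of "Suc n"] by simp
    qed simp
    finally show "\<bar>h (Suc n) - h n\<bar> \<le> 2 * K * norm (u (Suc n) - u n)" by (simp add: mult.commute)
  qed
  show "convergent (\<lambda>n. (norm (u n))\<^sup>2)" using conv_h[OF al bt(1) cP d1 d2] unfolding h_def .
qed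

lemma two_xy_le: fixes x y :: real shows "2 * x * y \<le> x\<^sup>2 + y\<^sup>2"
  using sum_squares_bound[of x y] by simp

lemma two_inner_le: fixes a b :: "'a::real_inner" shows "2 * inner a b \<le> (norm a)\<^sup>2 + (norm b)\<^sup>2"
proof -
  have "0 \<le> (norm (a - b))\<^sup>2" by simp
  also have "(norm (a - b))\<^sup>2 = (norm a)\<^sup>2 + (norm b)\<^sup>2 - 2 * inner a b"
    unfolding power2_norm_eq_inner by (simp add: inner_diff_left inner_diff_right inner_commute)
  finally show ?thesis by simp
qed

lemma H_lip:
  fixes D1 D2 E :: "'a::real_inner"
  assumes E: "norm E \<le> L * norm D1" and al: "al \<ge> 0" and lam: "lam \<ge> 0" and L: "L \<ge> 0"
  shows "2*al*inner D2 D1 - 2*lam*inner D2 E \<le> (al + lam*L) * ((norm D2)\<^sup>2 + (norm D1)\<^sup>2)"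
proof -
  have a: "2*al*inner D2 D1 \<le> al * ((norm D2)\<^sup>2 + (norm D1)\<^sup>2)"
    using mult_left_mono[OF two_inner_le[of D2 D1] al] by simp
  have "- inner D2 E \<le> norm D2 * norm E" using norm_cauchy_schwarz[of D2 "- E"] by simp
  also have "\<dots> \<le> norm D2 * (L * norm D1)" using E by (intro mult_left_mono) auto
  finally have "2 * (- inner D2 E) \<le> L * (2 * norm D2 * norm D1)" by (simp add: algebra_simps)
  also have "\<dots> \<le> L * ((norm D2)\<^sup>2 + (norm D1)\<^sup>2)"
    by (rule mult_left_mono[OF two_xy_le L])
  finally have "lam * (2 * (- inner D2 E)) \<le> lam * (L * ((norm D2)\<^sup>2 + (norm D1)\<^sup>2))"
    using lam by (intro mult_left_mono) auto
  with a show ?thesis by (simp add: algebra_simps)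
qed

lemma amgm_L:
  fixes x y L :: real assumes L: "L > 0"
  shows "2 * (x * y) \<le> (L/2) * x\<^sup>2 + 2 * ((1/L) * y\<^sup>2)"
proof -
  have "0 \<le> (L/2) * (x - (2/L) * y)\<^sup>2" using L by simp
  also have "(L/2) * (x - (2/L) * y)\<^sup>2 = (L/2) * x\<^sup>2 - 2 * (x * y) + 2 * ((1/L) * y\<^sup>2)"
    using L by (simp add: power2_eq_square field_simps)
  finally show ?thesis by simp
qed

lemma lin1: fixes X Y Z P1 Pd :: real
  shows "Y \<le> P1 \<Longrightarrow> -Pd \<le> X \<Longrightarrow> 2*X \<le> Z + 2*Y \<Longrightarrow> -(2*(P1+Pd)) \<le> Z" by simp

lemma H_coco_real:
  fixes N1 N2 I1 P1 Pd nE nd :: real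
  assumes i1: "2 * I1 = N2 + N1 - nd\<^sup>2" and co: "(1/L) * nE\<^sup>2 \<le> P1" and cs: "- Pd \<le> nd * nE"
    and nd2: "nd\<^sup>2 \<le> 2 * (N2 + N1)" and L: "L > 0" and al: "al \<ge> 0" and lam: "lam \<ge> 0"
  shows "2*al*I1 - 2*lam*(P1 + Pd) \<le> (al + max 0 (lam*L - 2*al)) * (N2 + N1)"
proof -
  have q: "2 * (nd * nE) \<le> (L/2) * nd\<^sup>2 + 2 * ((1/L) * nE\<^sup>2)" by (rule amgm_L[OF L])
  have "- (2 * (P1 + Pd)) \<le> (L/2) * nd\<^sup>2" by (rule lin1[OF co cs q])
  then have "lam * (- (2 * (P1 + Pd))) \<le> lam * ((L/2) * nd\<^sup>2)" using lam by (rule mult_left_mono)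
  then have a: "- 2*lam*(P1 + Pd) \<le> (lam*L/2) * nd\<^sup>2" by (simp add: algebra_simps)
  have "2*al*I1 = al*(2*I1)" by simp
  also have "\<dots> = al * (N2 + N1) - al * nd\<^sup>2" unfolding i1 by (simp add: algebra_simps)
  finally have b: "2*al*I1 = al * (N2 + N1) - al * nd\<^sup>2" .
  have "nd\<^sup>2 \<le> 2 * N2 + 2 * N1" using nd2 by (simp add: distrib_left)
  then have NN: "0 \<le> N2 + N1" using zero_le_power2[of nd] by linarith
  have c: "(lam*L/2 - al) * nd\<^sup>2 \<le> max 0 (lam*L - 2*al) * (N2 + N1)"
  proof (cases "lam*L/2 - al \<le> 0")
    case True
    then have "(lam*L/2 - al) * nd\<^sup>2 \<le> 0" by (simp add: mult_nonpos_nonneg)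
    also have "0 \<le> max 0 (lam*L - 2*al) * (N2 + N1)" using NN by simp
    finally show ?thesis .
  next
    case False
    then have "(lam*L/2 - al) * nd\<^sup>2 \<le> (lam*L/2 - al) * (2 * (N2 + N1))" using nd2 by (intro mult_left_mono) auto
    also have "\<dots> = (lam*L - 2*al) * (N2 + N1)" by (simp add: algebra_simps)
    also have "\<dots> \<le> max 0 (lam*L - 2*al) * (N2 + N1)" using NN by (intro mult_right_mono) auto
    finally show ?thesis .
  qed
  have "2*al*I1 - 2*lam*(P1 + Pd) \<le> al * (N2 + N1) + (lam*L/2 - al) * nd\<^sup>2"
    using a b by (simp add: algebra_simps)
  also have "\<dots> \<le> (al + max 0 (lam*L - 2*al)) * (N2 + N1)" using c by (simp add: algebra_simps)
  finally show ?thesis .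
qed

lemma H_coco:
  fixes D1 D2 E :: "'a::real_inner"
  assumes co: "(1/L) * (norm E)\<^sup>2 \<le> inner D1 E" and L: "L > 0" and al: "al \<ge> 0" and lam: "lam \<ge> 0"
  shows "2*al*inner D2 D1 - 2*lam*inner D2 E \<le> (al + max 0 (lam*L - 2*al)) * ((norm D2)\<^sup>2 + (norm D1)\<^sup>2)"
proof -
  have i1: "2 * inner D2 D1 = (norm D2)\<^sup>2 + (norm D1)\<^sup>2 - (norm (D2 - D1))\<^sup>2"
    unfolding power2_norm_eq_inner by (simp add: inner_diff_left inner_diff_right inner_commute)
  have i2: "inner D2 E = inner D1 E + inner (D2 - D1) E" by (simp add: inner_diff_left)
  have cs: "- inner (D2 - D1) E \<le> norm (D2 - D1) * norm E" using norm_cauchy_schwarz[of "D2 - D1" "- E"] by simp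
  have nd2: "(norm (D2 - D1))\<^sup>2 \<le> 2 * ((norm D2)\<^sup>2 + (norm D1)\<^sup>2)"
  proof -
    have "(norm (D2 - D1))\<^sup>2 = (norm D2)\<^sup>2 + (norm D1)\<^sup>2 - 2 * inner D2 D1" using i1 by simp
    moreover have "- (2 * inner D2 D1) \<le> (norm D2)\<^sup>2 + (norm D1)\<^sup>2" using two_inner_le[of D2 "- D1"] by simp
    ultimately show ?thesis by simp
  qed
  show ?thesis unfolding i2 by (rule H_coco_real[OF i1 co cs nd2 L al lam])
qed

lemma low_lip_real:
  fixes N1 y x I P :: real
  assumes I: "- I \<le> L * (x * y)" and P: "0 \<le> P" and bt: "bt > 0" and lam: "lam > 0" and L: "L > 0" and al: "al \<ge> 0"
  shows "bt*(N1 - (al + lam*L*bt)*y\<^sup>2) \<le> bt*(N1 - al*y\<^sup>2) + 2*lam*bt*P + 2*lam*bt*I + (al + lam*L + al*bt)*x\<^sup>2"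
proof -
  have q: "2*(x*(bt*y)) \<le> x\<^sup>2 + (bt*y)\<^sup>2" using two_xy_le[of x "bt*y"] by (simp add: mult.assoc)
  have "(2*lam*bt) * (- I) \<le> (2*lam*bt) * (L*(x*y))" using I lam bt by (intro mult_left_mono) auto
  then have a: "- (2*lam*bt*I) \<le> lam*L*(2*(x*(bt*y)))" by (simp add: algebra_simps)
  have c: "lam*L*(2*(x*(bt*y))) \<le> lam*L*(x\<^sup>2 + (bt*y)\<^sup>2)" using q lam L by (intro mult_left_mono) auto
  have d: "0 \<le> 2*lam*bt*P" using lam bt P by simp
  have e: "0 \<le> (al + al*bt)*x\<^sup>2" using al bt by simp
  have eq: "bt*(N1 - al*y\<^sup>2) + 2*lam*bt*P + 2*lam*bt*I + (al + lam*L + al*bt)*x\<^sup>2 - bt*(N1 - (al + lam*L*bt)*y\<^sup>2)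
     = 2*lam*bt*P + (2*lam*bt*I + lam*L*(x\<^sup>2 + (bt*y)\<^sup>2)) + (al + al*bt)*x\<^sup>2"
    by (simp add: algebra_simps power2_eq_square)
  show ?thesis using eq a c d e by (smt (verit))
qed

lemma low_lip:
  fixes U1 U0 E0 :: "'a::real_inner"
  assumes eb: "norm E0 \<le> L * norm U0" and ps: "0 \<le> inner U0 E0" and bt: "bt > 0" and lam: "lam > 0"
    and L: "L > 0" and al: "al \<ge> 0"
  shows "bt*((norm U1)\<^sup>2 - (al + lam*L*bt)*(norm U0)\<^sup>2) \<le> bt*((norm U1)\<^sup>2 - al*(norm U0)\<^sup>2)
     + 2*lam*bt*inner U0 E0 + 2*lam*bt*inner (U1 - U0) E0 + (al + lam*L + al*bt)*(norm (U1 - U0))\<^sup>2"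
proof -
  have "- inner (U1 - U0) E0 \<le> norm (U1 - U0) * norm E0" using norm_cauchy_schwarz[of "U1 - U0" "- E0"] by simp
  also have "\<dots> \<le> norm (U1 - U0) * (L * norm U0)" using eb by (intro mult_left_mono) auto
  finally have I: "- inner (U1 - U0) E0 \<le> L * (norm (U1 - U0) * norm U0)" by (simp add: algebra_simps)
  show ?thesis by (rule low_lip_real[OF I ps bt lam L al])
qed

lemma lin2: fixes C P I X A :: real
  shows "C \<le> P \<Longrightarrow> - I \<le> X \<Longrightarrow> 2 * X \<le> A + 2 * C \<Longrightarrow> 0 \<le> P + I + A / 2" by argo

lemma low_coco_real:
  fixes x nE P I :: real
  assumes co: "(1/L) * nE\<^sup>2 \<le> P" and I: "- I \<le> x * nE" and kap: "lam*bt*L/2 \<le> kap"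
    and bt: "bt > 0" and lam: "lam > 0" and L: "L > 0"
  shows "0 \<le> 2*lam*bt*P + 2*lam*bt*I + kap*x\<^sup>2"
proof -
  have q: "2 * (x * nE) \<le> (L/2) * x\<^sup>2 + 2 * ((1/L) * nE\<^sup>2)" by (rule amgm_L[OF L])
  have "0 \<le> P + I + ((L/2) * x\<^sup>2) / 2" by (rule lin2[OF co I q])
  then have "0 \<le> P + I + (L/4) * x\<^sup>2" by simp
  then have "0 \<le> (2*lam*bt) * (P + I + (L/4) * x\<^sup>2)" using lam bt by simp
  moreover have "(lam*bt*L/2) * x\<^sup>2 \<le> kap * x\<^sup>2" using kap by (intro mult_right_mono) auto
  moreover have "(2*lam*bt) * (P + I + (L/4) * x\<^sup>2) = 2*lam*bt*P + 2*lam*bt*I + (lam*bt*L/2) * x\<^sup>2"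
    by (simp add: algebra_simps)
  ultimately show ?thesis by (smt (verit))
qed

lemma low_coco:
  fixes U1 U0 E0 :: "'a::real_inner"
  assumes co: "(1/L) * (norm E0)\<^sup>2 \<le> inner U0 E0" and kap: "lam*bt*L/2 \<le> kap"
    and bt: "bt > 0" and lam: "lam > 0" and L: "L > 0"
  shows "bt*((norm U1)\<^sup>2 - al*(norm U0)\<^sup>2) \<le> bt*((norm U1)\<^sup>2 - al*(norm U0)\<^sup>2)
     + 2*lam*bt*inner U0 E0 + 2*lam*bt*inner (U1 - U0) E0 + kap*(norm (U1 - U0))\<^sup>2"
proof -
  have I: "- inner (U1 - U0) E0 \<le> norm (U1 - U0) * norm E0" using norm_cauchy_schwarz[of "U1 - U0" "- E0"] by simp
  have "0 \<le> 2*lam*bt*inner U0 E0 + 2*lam*bt*inner (U1 - U0) E0 + kap*(norm (U1 - U0))\<^sup>2"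
    by (rule low_coco_real[OF co I kap bt lam L])
  then show ?thesis by simp
qed

lemma fund_lemma:
  fixes A :: "'a::real_inner \<Rightarrow> 'a set" and B :: "'a \<Rightarrow> 'a"
  assumes monA: "monotone_op A" and bt: "bt > 0" and lam: "lam > 0"
    and aa: "aa \<in> A zz" and wa: "w = zz + lam *\<^sub>R aa"
    and wb: "w = xa - lam *\<^sub>R B xa - (lam / bt) *\<^sub>R (B xa - B xb) + (al / bt) *\<^sub>R (xa - xb)"
    and xc: "xc = (1 - bt) *\<^sub>R xa + bt *\<^sub>R zz"
    and qq: "qq \<in> A p" "qq + B p = 0"
  shows "0 \<le> inner ((xc - p) - (1-bt) *\<^sub>R (xa - p))
     (-((xc - p) - (xa - p)) + al *\<^sub>R ((xa - p) - (xb - p)) - (lam*(1+bt)) *\<^sub>R (B xa - B p) + lam *\<^sub>R (B xb - B p))"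
proof -
  have m: "0 \<le> inner (zz - p) (aa - qq)" using monA aa qq(1) unfolding monotone_op_def by blast
  have va: "(xc - p) - (1-bt) *\<^sub>R (xa - p) = bt *\<^sub>R (zz - p)" unfolding xc by (simp add: algebra_simps)
  have bw: "bt *\<^sub>R w = bt *\<^sub>R xa - (bt * lam) *\<^sub>R B xa - lam *\<^sub>R (B xa - B xb) + al *\<^sub>R (xa - xb)"
    unfolding wb using bt by (simp add: scaleR_add_right scaleR_diff_right)
  have la: "(lam * bt) *\<^sub>R aa = bt *\<^sub>R w - bt *\<^sub>R zz" unfolding wa by (simp add: algebra_simps)
  have qp: "qq = - B p" using qq(2) by (simp add: eq_neg_iff_add_eq_0)
  have vb: "-((xc - p) - (xa - p)) + al *\<^sub>R ((xa - p) - (xb - p)) - (lam*(1+bt)) *\<^sub>R (B xa - B p) + lam *\<^sub>R (B xb - B p)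
      = (lam * bt) *\<^sub>R (aa - qq)"
  proof -
    have "(lam * bt) *\<^sub>R (aa - qq) = (lam * bt) *\<^sub>R aa + (lam * bt) *\<^sub>R B p" unfolding qp by (simp add: algebra_simps)
    also have "\<dots> = bt *\<^sub>R xa - (bt * lam) *\<^sub>R B xa - lam *\<^sub>R (B xa - B xb) + al *\<^sub>R (xa - xb) - bt *\<^sub>R zz + (lam * bt) *\<^sub>R B p"
      unfolding la bw ..
    also have "\<dots> = -((xc - p) - (xa - p)) + al *\<^sub>R ((xa - p) - (xb - p)) - (lam*(1+bt)) *\<^sub>R (B xa - B p) + lam *\<^sub>R (B xb - B p)"
      unfolding xc by (simp add: algebra_simps)
    finally show ?thesis by simp
  qed
  have "inner (bt *\<^sub>R (zz - p)) ((lam * bt) *\<^sub>R (aa - qq)) = bt * (lam * bt) * inner (zz - p) (aa - qq)" by simp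
  also have "\<dots> \<ge> 0" using m bt lam by simp
  finally show ?thesis unfolding va vb by simp
qed

theorem theorem4p3:
  fixes A :: "'a::{real_inner, complete_space} \<Rightarrow> 'a set"
    and B :: "'a \<Rightarrow> 'a"
    and alpha beta lam L :: real
    and x z :: "nat \<Rightarrow> 'a"
    and xm1 :: 'a
  assumes maxA: "maximal_monotone A"
    and monB: "monotone_op (\<lambda>y. {B y})"
    and nonempty: "zeros_sum A B \<noteq> {}"
    and alpha: "0 \<le> alpha" "alpha < 1"
    and beta: "0 < beta" "beta \<le> 1"
    and lam: "lam > 0"
    and L: "L > 0"
    and cases:
      "(L-lipschitz_on UNIV B \<and>
          lam < min ((2 - beta - alpha * beta - 2 * alpha) / (2 * L))
                    ((1 - alpha - alpha * beta) / (beta * L)))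
       \<or> (cocoercive (1 / L) B \<and> alpha < (2 - beta) / (2 + beta) \<and>
          lam < min ((2 - beta - alpha * beta + 2 * alpha) / (2 * L))
                    ((1 - alpha + alpha * beta) / (beta * L)))"
    and zrec: "\<And>k. z (Suc k) = resolvent lam A
        (x k - lam *\<^sub>R B (x k)
             - (lam / beta) *\<^sub>R (B (x k) - B (if k = 0 then xm1 else x (k - 1)))
             + (alpha / beta) *\<^sub>R (x k - (if k = 0 then xm1 else x (k - 1))))"
    and xrec: "\<And>k. x (Suc k) = (1 - beta) *\<^sub>R x k + beta *\<^sub>R z (Suc k)"
  shows "\<exists>p \<in> zeros_sum A B. weakly_converges x p"
proof -
  have monA: "monotone_op A" using maxA unfolding maximal_monotone_def by simp
  have monB': "0 \<le> inner (u - v) (B u - B v)" for u v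
    using monB unfolding monotone_op_def by blast
  have lip: "norm (B u - B v) \<le> L * norm (u - v)" for u v
    using cases
  proof (elim disjE conjE)
    assume "L-lipschitz_on UNIV B"
    from lipschitz_onD[OF this] show ?thesis by (simp add: dist_norm)
  next
    assume co: "cocoercive (1 / L) B"
    have c1: "(1 / L) * (norm (B u - B v))\<^sup>2 \<le> inner (u - v) (B u - B v)"
      using co unfolding cocoercive_def by blast
    also have "\<dots> \<le> norm (u - v) * norm (B u - B v)" by (rule norm_cauchy_schwarz)
    finally have c2: "(1 / L) * (norm (B u - B v))\<^sup>2 \<le> norm (u - v) * norm (B u - B v)" .
    show ?thesis
    proof (cases "norm (B u - B v) = 0")
      case True then show ?thesis using L by simp
    next
      case False
      then have pos: "norm (B u - B v) > 0" by simp
      have "(1 / L) * norm (B u - B v) * norm (B u - B v) \<le> norm (u - v) * norm (B u - B v)"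
        using c2 by (simp add: power2_eq_square mult.assoc)
      then have "(1 / L) * norm (B u - B v) \<le> norm (u - v)" using pos by (rule mult_right_le_imp_le)
      then show ?thesis using L by (simp add: field_simps)
    qed
  qed
  define yy where "yy n = (if n = 0 then xm1 else x (n - 1))" for n
  have yyS: "yy (Suc k) = x k" for k unfolding yy_def by simp
  have yyk: "(if k = 0 then xm1 else x (k - 1)) = yy k" for k unfolding yy_def by simp
  define wk where "wk k = x k - lam *\<^sub>R B (x k) - (lam / beta) *\<^sub>R (B (x k) - B (yy k)) + (alpha / beta) *\<^sub>R (x k - yy k)" for k
  have zk: "z (Suc k) = resolvent lam A (wk k)" for k using zrec[of k] unfolding wk_def yyk .
  have "\<forall>k. \<exists>u. u \<in> A (z (Suc k)) \<and> wk k = z (Suc k) + lam *\<^sub>R u"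
    using resolvent_char[OF maxA lam] unfolding zk by blast
  then obtain a where a: "\<And>k. a k \<in> A (z (Suc k))" "\<And>k. wk k = z (Suc k) + lam *\<^sub>R a k"
    by metis
  have key: "convergent (\<lambda>n. (norm (yy n - p))\<^sup>2) \<and> (\<lambda>n. (yy (Suc n) - p) - (yy n - p)) \<longlonglongrightarrow> 0"
    if pS: "p \<in> zeros_sum A B" for p
  proof -
    obtain q0 where q0: "q0 \<in> A p" "q0 + B p = 0" using pS unfolding zeros_sum_def by blast
    have fund: "0 \<le> inner ((yy (Suc (Suc n)) - p) - (1-beta) *\<^sub>R (yy (Suc n) - p))
       (-((yy (Suc (Suc n)) - p) - (yy (Suc n) - p)) + alpha *\<^sub>R ((yy (Suc n) - p) - (yy n - p))
        - (lam*(1+beta)) *\<^sub>R (B (yy (Suc n)) - B p) + lam *\<^sub>R (B (yy n) - B p))" for n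
    proof (rule fund_lemma[where A=A and bt=beta and lam=lam and aa="a n" and zz="z (Suc n)" and w="wk n"
        and xa="yy (Suc n)" and B=B and xb="yy n" and al=alpha and xc="yy (Suc (Suc n))" and qq=q0 and p=p,
        OF monA beta(1) lam a(1)[of n] a(2)[of n] _ _ q0])
      show "wk n = yy (Suc n) - lam *\<^sub>R B (yy (Suc n)) - (lam / beta) *\<^sub>R (B (yy (Suc n)) - B (yy n))
          + (alpha / beta) *\<^sub>R (yy (Suc n) - yy n)" unfolding wk_def yyS ..
      show "yy (Suc (Suc n)) = (1 - beta) *\<^sub>R yy (Suc n) + beta *\<^sub>R z (Suc n)" unfolding yyS by (rule xrec)
    qed
    have psi0: "0 \<le> inner (yy n - p) (B (yy n) - B p)" for n by (rule monB')
    have eb: "norm (B (yy n) - B p) \<le> L * norm (yy n - p)" for n by (rule lip)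
    have D1: "(yy (Suc n) - p) - (yy n - p) = yy (Suc n) - yy n" for n by simp
    have E1: "(B (yy (Suc n)) - B p) - (B (yy n) - B p) = B (yy (Suc n)) - B (yy n)" for n by simp
    from cases show ?thesis
    proof (elim disjE conjE)
      assume lc: "lam < min ((2 - beta - alpha * beta - 2 * alpha) / (2 * L)) ((1 - alpha - alpha * beta) / (beta * L))"
      have l1: "lam * (2 * L) < 2 - beta - alpha * beta - 2 * alpha"
        using lc L by (simp add: pos_less_divide_eq)
      have l2: "lam * (beta * L) < 1 - alpha - alpha * beta"
        using lc L beta by (simp add: pos_less_divide_eq)
      have m0: "lam * L \<ge> 0" using lam L by simp
      have eps: "2 - beta - 2*alpha - alpha*beta - 2*(lam*L) > 0" using l1 by (simp add: algebra_simps)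
      have r0: "0 \<le> alpha + lam*L*beta" using alpha lam L beta by simp
      have "alpha * beta \<ge> 0" using alpha beta by simp
      then have r1: "alpha + lam*L*beta < 1" using l2 by (simp add: algebra_simps)
      have H: "2*alpha*inner ((yy (Suc (Suc n)) - p) - (yy (Suc n) - p)) ((yy (Suc n) - p) - (yy n - p))
        - 2*lam*inner ((yy (Suc (Suc n)) - p) - (yy (Suc n) - p)) ((B (yy (Suc n)) - B p) - (B (yy n) - B p))
        \<le> (alpha + lam*L) * ((norm ((yy (Suc (Suc n)) - p) - (yy (Suc n) - p)))\<^sup>2 + (norm ((yy (Suc n) - p) - (yy n - p)))\<^sup>2)" for n
      proof (rule H_lip)
        show "norm ((B (yy (Suc n)) - B p) - (B (yy n) - B p)) \<le> L * norm ((yy (Suc n) - p) - (yy n - p))"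
          unfolding D1 E1 by (rule lip)
      qed (use alpha lam L in auto)
      have low: "beta*((norm (yy (Suc n) - p))\<^sup>2 - (alpha + lam*L*beta)*(norm (yy n - p))\<^sup>2) \<le>
        beta*((norm (yy (Suc n) - p))\<^sup>2 - alpha*(norm (yy n - p))\<^sup>2) + 2*lam*beta*inner (yy n - p) (B (yy n) - B p)
        + 2*lam*beta*inner ((yy (Suc n) - p) - (yy n - p)) (B (yy n) - B p)
        + (alpha + lam*L + alpha*beta)*(norm ((yy (Suc n) - p) - (yy n - p)))\<^sup>2" for n
        by (rule low_lip[OF eb psi0 beta(1) lam L alpha(1)])
      show ?thesis
        using per_p[of alpha beta lam L "lam*L" "alpha + lam*L*beta" "\<lambda>n. yy n - p" "\<lambda>n. B (yy n) - B p",
            OF alpha beta lam L m0 eps r0 r1 fund H low psi0 eb] by simp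
    next
      assume co: "cocoercive (1 / L) B" and ac: "alpha < (2 - beta) / (2 + beta)"
        and lc: "lam < min ((2 - beta - alpha * beta + 2 * alpha) / (2 * L)) ((1 - alpha + alpha * beta) / (beta * L))"
      define m where "m = max 0 (lam*L - 2*alpha)"
      have m0: "m \<ge> 0" unfolding m_def by simp
      have a1: "alpha * (2 + beta) < 2 - beta" using ac beta by (simp add: pos_less_divide_eq)
      have l1: "lam * (2 * L) < 2 - beta - alpha * beta + 2 * alpha"
        using lc L by (simp add: pos_less_divide_eq)
      have eps: "2 - beta - 2*alpha - alpha*beta - 2*m > 0"
      proof (cases "lam*L \<le> 2*alpha")
        case True then have "m = 0" unfolding m_def by simp
        then show ?thesis using a1 by (simp add: algebra_simps)
      next
        case False then have "m = lam*L - 2*alpha" unfolding m_def by simp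
        then show ?thesis using l1 by (simp add: algebra_simps)
      qed
      have kap: "lam*beta*L/2 \<le> alpha + m + alpha*beta"
      proof (cases "lam*L \<le> 2*alpha")
        case True then have m: "m = 0" unfolding m_def by simp
        have "lam*beta*L/2 = beta * (lam*L/2)" by simp
        also have "\<dots> \<le> beta * alpha" using True beta by (intro mult_left_mono) auto
        finally have f1: "lam*beta*L/2 \<le> beta * alpha" .
        have f2: "alpha*beta = beta*alpha" by simp
        show ?thesis using m f1 f2 alpha(1) by argo
      next
        case False then have m: "m = lam*L - 2*alpha" unfolding m_def by simp
        have "lam*beta*L/2 = beta * (lam*L/2)" by simp
        also have "\<dots> \<le> 1 * (lam*L/2)" using beta lam L by (intro mult_right_mono) auto
        finally have "lam*beta*L/2 \<le> lam*L/2" by simp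
        moreover have "0 \<le> alpha*beta" using alpha beta by simp
        ultimately show ?thesis using m False by (simp add: algebra_simps)
      qed
      have cob: "(1/L) * (norm (B u - B v))\<^sup>2 \<le> inner (u - v) (B u - B v)" for u v
        using co unfolding cocoercive_def by blast
      have H: "2*alpha*inner ((yy (Suc (Suc n)) - p) - (yy (Suc n) - p)) ((yy (Suc n) - p) - (yy n - p))
        - 2*lam*inner ((yy (Suc (Suc n)) - p) - (yy (Suc n) - p)) ((B (yy (Suc n)) - B p) - (B (yy n) - B p))
        \<le> (alpha + m) * ((norm ((yy (Suc (Suc n)) - p) - (yy (Suc n) - p)))\<^sup>2 + (norm ((yy (Suc n) - p) - (yy n - p)))\<^sup>2)" for n
        unfolding m_def
      proof (rule H_coco)
        show "(1/L) * (norm ((B (yy (Suc n)) - B p) - (B (yy n) - B p)))\<^sup>2 \<le> inner ((yy (Suc n) - p) - (yy n - p)) ((B (yy (Suc n)) - B p) - (B (yy n) - B p))"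
          unfolding D1 E1 by (rule cob)
      qed (use alpha lam L in auto)
      have low: "beta*((norm (yy (Suc n) - p))\<^sup>2 - alpha*(norm (yy n - p))\<^sup>2) \<le>
        beta*((norm (yy (Suc n) - p))\<^sup>2 - alpha*(norm (yy n - p))\<^sup>2) + 2*lam*beta*inner (yy n - p) (B (yy n) - B p)
        + 2*lam*beta*inner ((yy (Suc n) - p) - (yy n - p)) (B (yy n) - B p)
        + (alpha + m + alpha*beta)*(norm ((yy (Suc n) - p) - (yy n - p)))\<^sup>2" for n
        by (rule low_coco[OF cob kap beta(1) lam L])
      show ?thesis
        using per_p[of alpha beta lam L m alpha "\<lambda>n. yy n - p" "\<lambda>n. B (yy n) - B p",
            OF alpha beta lam L m0 eps alpha(1) alpha(2) fund H low psi0 eb] by simp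
    qed
  qed
  define S where "S = zeros_sum A B"
  obtain p0 where p0: "p0 \<in> S" using nonempty unfolding S_def by blast
  have dyy: "(\<lambda>n. yy (Suc n) - yy n) \<longlonglongrightarrow> 0" using key[of p0] p0 unfolding S_def by simp
  have dy: "(\<lambda>k. x k - yy k) \<longlonglongrightarrow> 0" using dyy unfolding yyS .
  have dx: "(\<lambda>k. x (Suc k) - x k) \<longlonglongrightarrow> 0" using LIMSEQ_Suc[OF dy] unfolding yyS .
  have limx: "convergent (\<lambda>k. (norm (x k - p))\<^sup>2)" if "p \<in> S" for p
  proof -
    have "convergent (\<lambda>n. (norm (yy n - p))\<^sup>2)" using key that unfolding S_def by blast
    then have "convergent (\<lambda>n. (norm (yy (n + 1) - p))\<^sup>2)"
      by (subst convergent_ignore_initial_segment)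
    then show ?thesis by (simp add: yyS)
  qed
  obtain R where R: "\<And>k. norm (x k) \<le> R"
  proof -
    have "Bseq (\<lambda>k. (norm (x k - p0))\<^sup>2)" using limx[OF p0] by (rule convergent_imp_Bseq)
    then obtain K where K: "\<And>k. norm ((norm (x k - p0))\<^sup>2) \<le> K" unfolding Bseq_def by auto
    have "norm (x k) \<le> norm p0 + max 1 K" for k
    proof -
      have aa: "norm (x k - p0) \<le> max 1 K"
      proof (cases "norm (x k - p0) \<le> 1")
        case False
        then have "1 \<le> norm (x k - p0)" by simp
        then have "norm (x k - p0) \<le> (norm (x k - p0))\<^sup>2"
          using mult_left_mono[of 1 "norm (x k - p0)" "norm (x k - p0)"] by (simp add: power2_eq_square)
        also have "\<dots> \<le> K" using K[of k] by simp
        finally show ?thesis by simp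
      qed simp
      have "norm (x k) \<le> norm p0 + norm (x k - p0)" by (rule norm_triangle_sub)
      then show ?thesis using aa by simp
    qed
    then show ?thesis using that by blast
  qed
  have zx: "(\<lambda>k. z (Suc k) - x k) \<longlonglongrightarrow> 0"
  proof -
    have "z (Suc k) - x k = (1 / beta) *\<^sub>R (x (Suc k) - x k)" for k
      unfolding xrec using beta by (simp add: algebra_simps)
    moreover have "(\<lambda>k. (1 / beta) *\<^sub>R (x (Suc k) - x k)) \<longlonglongrightarrow> (1 / beta) *\<^sub>R 0"
      by (intro tendsto_intros dx)
    ultimately show ?thesis by simp
  qed
  have lipz: "(\<lambda>k. B (f k) - B (g k)) \<longlonglongrightarrow> 0" if fg: "(\<lambda>k. f k - g k) \<longlonglongrightarrow> 0" for f g :: "nat \<Rightarrow> 'a"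
    by (rule tendsto_0_le[OF fg, of _ L]) (intro always_eventually allI, simp add: lip mult.commute)
  have ab: "(\<lambda>k. a k + B (z (Suc k))) \<longlonglongrightarrow> 0"
  proof -
    have eq: "a k + B (z (Suc k)) = (1 / lam) *\<^sub>R ((x k - z (Suc k)) + lam *\<^sub>R (B (z (Suc k)) - B (x k))
        - (lam / beta) *\<^sub>R (B (x k) - B (yy k)) + (alpha / beta) *\<^sub>R (x k - yy k))" for k
    proof -
      have "lam *\<^sub>R a k = wk k - z (Suc k)" using a(2)[of k] by simp
      then have "lam *\<^sub>R (a k + B (z (Suc k))) = (x k - z (Suc k)) + lam *\<^sub>R (B (z (Suc k)) - B (x k))
        - (lam / beta) *\<^sub>R (B (x k) - B (yy k)) + (alpha / beta) *\<^sub>R (x k - yy k)"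
        unfolding wk_def by (simp add: algebra_simps)
      then have "(1 / lam) *\<^sub>R (lam *\<^sub>R (a k + B (z (Suc k)))) = (1 / lam) *\<^sub>R ((x k - z (Suc k)) + lam *\<^sub>R (B (z (Suc k)) - B (x k))
        - (lam / beta) *\<^sub>R (B (x k) - B (yy k)) + (alpha / beta) *\<^sub>R (x k - yy k))" by simp
      then show ?thesis using lam by simp
    qed
    have t1: "(\<lambda>k. x k - z (Suc k)) \<longlonglongrightarrow> 0" using tendsto_minus[OF zx] by simp
    have t2: "(\<lambda>k. B (z (Suc k)) - B (x k)) \<longlonglongrightarrow> 0" by (rule lipz[OF zx])
    have t3: "(\<lambda>k. B (x k) - B (yy k)) \<longlonglongrightarrow> 0" by (rule lipz[OF dy])
    have "(\<lambda>k. (1 / lam) *\<^sub>R ((x k - z (Suc k)) + lam *\<^sub>R (B (z (Suc k)) - B (x k))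
        - (lam / beta) *\<^sub>R (B (x k) - B (yy k)) + (alpha / beta) *\<^sub>R (x k - yy k)))
        \<longlonglongrightarrow> (1 / lam) *\<^sub>R (0 + lam *\<^sub>R 0 - (lam / beta) *\<^sub>R 0 + (alpha / beta) *\<^sub>R 0)"
      by (intro tendsto_intros t1 t2 t3 dy)
    then show ?thesis unfolding eq by simp
  qed
  have "\<exists>p\<in>S. weakly_converges x p"
  proof (rule opial)
    show "S \<noteq> {}" using p0 by blast
    show "\<And>p. p \<in> S \<Longrightarrow> convergent (\<lambda>k. (norm (x k - p))\<^sup>2)" by (rule limx)
    fix r q assume r: "strict_mono r" and wq: "\<forall>d. (\<lambda>j. inner (x (r j)) d) \<longlonglongrightarrow> inner q d"
    show "q \<in> S" unfolding S_def
      by (rule cluster[OF maxA L monB' lip a(1) zx ab r _ R]) (use wq in blast)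
  qed
  then show ?thesis unfolding S_def .
qed

end
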